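(* Let $G$ be a connected graph and let $\mathcal T=(T,\mathcal X)$ be a tree-cut decomposition of $G$ of finite adhesion whose parts are exactly the $\omega$-edge blocks of $G$ and such that for every edge $t_1t_2\in E(T)$ there is an edge of $G$ between $X_{t_1}$ and $X_{t_2}$. Then the map $\varphi_{\mathcal T}:\Omega_E(G)\to\|T\|$ is a topological embedding. Moreover: (1) $\varphi_{\mathcal T}$ restricts to a bijection between the edge-ends of $G$ that are not edge-dominated by any vertex and the ends of $T$; (2) $\varphi_{\mathcal T}$ restricts to an injection from the edge-dominated edge-ends of $G$ into $V(T)$, and for each such edge-end $\omega$ the vertices in $X_{\varphi_{\mathcal T}(\omega)}$ are precisely the vertices of $G$ that edge-dominate $\omega$.
   Context: Rays are one-way infinite paths; two rays are edge-equivalent if no finite edge set separates them; the classes are edge-ends, forming $\Omega_E(G)$. For finite $F\subseteq E(G)$ and an edge-end $\omega$, $C(F,\omega)$ is the unique component of $G-F$ containing a tail of every ray in $\omega$. An edge-end $\omega$ is edge-dominated by a vertex $v$ if $v\in C(F,\omega)$ for every finite $F\subseteq E(G)$. A region of a graph $H$ is a connected induced subgraph $C$ with finite boundary $\partial C$; $\Omega_E(C)$ is the set of edge-ends having a ray in $C$, $\|C\|=V(C)\cup\Omega_E(C)$. The sets $\Omega_E(C)$ (resp. $\|C\|$) for regions $C$ form a basis of $\Omega_E(H)$ (resp. $\|H\|=V(H)\cup\Omega_E(H)$); for a tree $T$, $\Omega_E(T)$ is its usual end space $\Omega(T)$. The $\omega$-edge blocks of $G$ are the classes of the relation "$x,y$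 cannot be separated by finitely many edges". A tree-cut decomposition $(T,\mathcal X)$ is a tree $T$ with a partition $\mathcal X=\{X_t:t\in V(T)\}$ of $V(G)$ into nonempty parts; the adhesion set of $e=t_1t_2\in E(T)$ is $X_e=E_G(\bigcup_{t\in T_1}X_t,\bigcup_{t\in T_2}X_t)$ where $T_1\ni t_1,T_2\ni t_2$ are the components of $T-e$; finite adhesion means all $X_e$ finite. Definition of $\varphi_{\mathcal T}$: for an edge-end $\omega$ and $e\in E(T)$, since $X_e$ is finite, every ray of $\omega$ has a tail in $G[\bigcup_{t\in T_i}X_t]$ for the same unique $i\in\{1,2\}$; orient $e$ towards $T_i$. Then either all edges of $T$ are oriented towards a unique node $t$, or towards a unique end of $T$; $\varphi_{\mathcal T}(\omega)$ is this node or end. *)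

theory Defs
  imports "HOL-Analysis.Analysis"
begin

definition graph :: "'v set \<Rightarrow> 'v set set \<Rightarrow> bool" where
  "graph V E \<longleftrightarrow> (\<forall>e\<in>E. \<exists>x y. x \<noteq> y \<and> x \<in> V \<and> y \<in> V \<and> e = {x, y})"

definition adj :: "'v set \<Rightarrow> 'v set set \<Rightarrow> 'v \<Rightarrow> 'v \<Rightarrow> bool" where
  "adj V E x y \<longleftrightarrow> x \<in> V \<and> y \<in> V \<and> {x, y} \<in> E"

text \<open>conn V E x y: x and y are joined by a path in the graph (V, E) (restricted to edges inside V,
  so conn C E is connectivity in the induced subgraph on C).\<close>
definition conn :: "'v set \<Rightarrow> 'v set set \<Rightarrow> 'v \<Rightarrow> 'v \<Rightarrow> bool" where
  "conn V E x y \<longleftrightarrow> (adj V E)\<^sup>*\<^sup>* x y"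

definition connected_graph :: "'v set \<Rightarrow> 'v set set \<Rightarrow> bool" where
  "connected_graph V E \<longleftrightarrow> V \<noteq> {} \<and> (\<forall>x\<in>V. \<forall>y\<in>V. conn V E x y)"

definition tree :: "'n set \<Rightarrow> 'n set set \<Rightarrow> bool" where
  "tree N ET \<longleftrightarrow> graph N ET \<and> connected_graph N ET \<and>
     (\<forall>x y. {x, y} \<in> ET \<longrightarrow> \<not> conn N (ET - {{x, y}}) x y)"

definition ray :: "'v set \<Rightarrow> 'v set set \<Rightarrow> (nat \<Rightarrow> 'v) \<Rightarrow> bool" where
  "ray V E r \<longleftrightarrow> inj r \<and> (\<forall>i. r i \<in> V \<and> {r i, r (Suc i)} \<in> E)"

definition has_tail_in :: "(nat \<Rightarrow> 'v) \<Rightarrow> 'v set \<Rightarrow> bool" where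
  "has_tail_in r S \<longleftrightarrow> (\<exists>n. \<forall>i\<ge>n. r i \<in> S)"

definition edge_equiv :: "'v set \<Rightarrow> 'v set set \<Rightarrow> (nat \<Rightarrow> 'v) \<Rightarrow> (nat \<Rightarrow> 'v) \<Rightarrow> bool" where
  "edge_equiv V E r s \<longleftrightarrow>
     (\<forall>F. finite F \<and> F \<subseteq> E \<longrightarrow> (\<exists>n. \<forall>i\<ge>n. \<forall>j\<ge>n. conn V (E - F) (r i) (s j)))"

definition edge_ends :: "'v set \<Rightarrow> 'v set set \<Rightarrow> (nat \<Rightarrow> 'v) set set" where
  "edge_ends V E = {{s. ray V E s \<and> edge_equiv V E r s} | r. ray V E r}"

definition edge_dominates :: "'v set \<Rightarrow> 'v set set \<Rightarrow> 'v \<Rightarrow> (nat \<Rightarrow> 'v) set \<Rightarrow> bool" where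
  "edge_dominates V E v \<omega> \<longleftrightarrow> v \<in> V \<and>
     (\<forall>F. finite F \<and> F \<subseteq> E \<longrightarrow> (\<forall>r\<in>\<omega>. \<exists>n. \<forall>i\<ge>n. conn V (E - F) v (r i)))"

definition boundary :: "'v set set \<Rightarrow> 'v set \<Rightarrow> 'v set set" where
  "boundary E C = {e \<in> E. e \<inter> C \<noteq> {} \<and> e - C \<noteq> {}}"

definition region :: "'v set \<Rightarrow> 'v set set \<Rightarrow> 'v set \<Rightarrow> bool" where
  "region V E C \<longleftrightarrow> C \<subseteq> V \<and> connected_graph C E \<and> finite (boundary E C)"

definition region_ends :: "'v set \<Rightarrow> 'v set set \<Rightarrow> 'v set \<Rightarrow> (nat \<Rightarrow> 'v) set set" where
  "region_ends V E C = {\<omega> \<in> edge_ends V E. \<exists>r\<in>\<omega>. \<forall>i. r i \<in> C}"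

definition edge_end_top :: "'v set \<Rightarrow> 'v set set \<Rightarrow> (nat \<Rightarrow> 'v) set topology" where
  "edge_end_top V E = subtopology
     (topology_generated_by {region_ends V E C | C. region V E C}) (edge_ends V E)"

text \<open>\<parallel>H\<parallel> = V(H) \<union> \<Omega>_E(H), vertices tagged Inl, edge-ends tagged Inr.\<close>
definition full_space :: "'n set \<Rightarrow> 'n set set \<Rightarrow> ('n + (nat \<Rightarrow> 'n) set) set" where
  "full_space N ET = Inl ` N \<union> Inr ` edge_ends N ET"

definition full_top :: "'n set \<Rightarrow> 'n set set \<Rightarrow> ('n + (nat \<Rightarrow> 'n) set) topology" where
  "full_top N ET = subtopology
     (topology_generated_by {Inl ` C \<union> Inr ` region_ends N ET C | C. region N ET C})
     (full_space N ET)"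

definition tree_cut_decomp ::
  "'v set \<Rightarrow> 'v set set \<Rightarrow> 'n set \<Rightarrow> 'n set set \<Rightarrow> ('n \<Rightarrow> 'v set) \<Rightarrow> bool" where
  "tree_cut_decomp V E N ET X \<longleftrightarrow> tree N ET \<and>
     (\<forall>t\<in>N. X t \<noteq> {}) \<and> (\<Union>t\<in>N. X t) = V \<and>
     (\<forall>t\<in>N. \<forall>s\<in>N. t \<noteq> s \<longrightarrow> X t \<inter> X s = {})"

definition tside :: "'n set \<Rightarrow> 'n set set \<Rightarrow> 'n set \<Rightarrow> 'n \<Rightarrow> 'n set" where
  "tside N ET e u = {s \<in> N. conn N (ET - {e}) u s}"

definition adhesion ::
  "'v set set \<Rightarrow> 'n set \<Rightarrow> 'n set set \<Rightarrow> ('n \<Rightarrow> 'v set) \<Rightarrow> 'n \<Rightarrow> 'n \<Rightarrow> 'v set set" where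
  "adhesion E N ET X t1 t2 =
     {e \<in> E. \<exists>x y. e = {x, y} \<and> x \<in> (\<Union>t\<in>tside N ET {t1, t2} t1. X t)
                              \<and> y \<in> (\<Union>t\<in>tside N ET {t1, t2} t2. X t)}"

definition finite_adhesion ::
  "'v set set \<Rightarrow> 'n set \<Rightarrow> 'n set set \<Rightarrow> ('n \<Rightarrow> 'v set) \<Rightarrow> bool" where
  "finite_adhesion E N ET X \<longleftrightarrow> (\<forall>t1 t2. {t1, t2} \<in> ET \<longrightarrow> finite (adhesion E N ET X t1 t2))"

definition edge_insep :: "'v set \<Rightarrow> 'v set set \<Rightarrow> ('v \<times> 'v) set" where
  "edge_insep V E = {(x, y). x \<in> V \<and> y \<in> V \<and>
     (\<forall>F. finite F \<and> F \<subseteq> E \<longrightarrow> conn V (E - F) x y)}"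

definition edge_blocks :: "'v set \<Rightarrow> 'v set set \<Rightarrow> 'v set set" where
  "edge_blocks V E = V // edge_insep V E"

definition oriented_towards ::
  "'n set \<Rightarrow> 'n set set \<Rightarrow> ('n \<Rightarrow> 'v set) \<Rightarrow> (nat \<Rightarrow> 'v) set \<Rightarrow> 'n set \<Rightarrow> 'n \<Rightarrow> bool" where
  "oriented_towards N ET X \<omega> e u \<longleftrightarrow> (\<forall>r\<in>\<omega>. has_tail_in r (\<Union>t\<in>tside N ET e u. X t))"

definition points_to ::
  "'n set \<Rightarrow> 'n set set \<Rightarrow> ('n \<Rightarrow> 'v set) \<Rightarrow> (nat \<Rightarrow> 'v) set \<Rightarrow> 'n + (nat \<Rightarrow> 'n) set \<Rightarrow> bool" where
  "points_to N ET X \<omega> z \<longleftrightarrow> (case z of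
      Inl t \<Rightarrow> (\<forall>e\<in>ET. \<forall>u\<in>e. t \<in> tside N ET e u \<longrightarrow> oriented_towards N ET X \<omega> e u)
    | Inr \<eta> \<Rightarrow> (\<forall>e\<in>ET. \<forall>u\<in>e. (\<forall>q\<in>\<eta>. has_tail_in q (tside N ET e u))
                                   \<longrightarrow> oriented_towards N ET X \<omega> e u))"

definition phi ::
  "'n set \<Rightarrow> 'n set set \<Rightarrow> ('n \<Rightarrow> 'v set) \<Rightarrow> (nat \<Rightarrow> 'v) set \<Rightarrow> 'n + (nat \<Rightarrow> 'n) set" where
  "phi N ET X \<omega> = (THE z. z \<in> full_space N ET \<and> points_to N ET X \<omega> z)"

end

theory Submission
  imports Defs "HOL-Library.Transitive_Closure_Table"
begin


lemma adj_sym: "adj V E x y = adj V E y x"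
  unfolding adj_def by (auto simp: insert_commute)

lemma conn_refl: "conn V E x x" unfolding conn_def by simp

lemma conn_sym: "conn V E x y \<Longrightarrow> conn V E y x"
  unfolding conn_def
proof (induction rule: rtranclp_induct)
  case base thus ?case by simp
next
  case (step y z) thus ?case by (metis adj_sym converse_rtranclp_into_rtranclp)
qed

lemma conn_trans: "conn V E x y \<Longrightarrow> conn V E y z \<Longrightarrow> conn V E x z"
  unfolding conn_def by (rule rtranclp_trans)

lemma conn_step: "conn V E x y \<Longrightarrow> adj V E y z \<Longrightarrow> conn V E x z"
  unfolding conn_def by (rule rtranclp.rtrancl_into_rtrancl)

lemma conn_edge: "x \<in> V \<Longrightarrow> y \<in> V \<Longrightarrow> {x,y} \<in> E \<Longrightarrow> conn V E x y"
  unfolding conn_def adj_def by auto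

lemma conn_mono: "conn V E x y \<Longrightarrow> V \<subseteq> V' \<Longrightarrow> E \<subseteq> E' \<Longrightarrow> conn V' E' x y"
  unfolding conn_def
proof (induction rule: rtranclp_induct)
  case base thus ?case by simp
next
  case (step y z)
  have "adj V' E' y z" using step by (auto simp: adj_def)
  thus ?case using step by (meson rtranclp.rtrancl_into_rtrancl)
qed

lemma conn_closed:
  assumes "conn V E x y" "x \<in> S" "\<And>a b. a \<in> S \<Longrightarrow> adj V E a b \<Longrightarrow> b \<in> S"
  shows "y \<in> S"
  using assms(1,2) unfolding conn_def
  by (induction rule: rtranclp_induct) (auto intro: assms(3))

lemma conn_in: "conn V E x y \<Longrightarrow> x \<in> V \<Longrightarrow> y \<in> V"
  by (erule conn_closed) (auto simp: adj_def)

lemma conn_restrict: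
  assumes "conn V E x y" "x \<in> S" "\<And>a b. a \<in> S \<Longrightarrow> adj V E a b \<Longrightarrow> b \<in> S"
  shows "conn S E x y"
proof -
  have "y \<in> S \<and> conn S E x y"
    using assms(1,2) unfolding conn_def
  proof (induction rule: rtranclp_induct)
    case base thus ?case by simp
  next
    case (step y z)
    then have "z \<in> S" using assms(3) by blast
    with step show ?case by (auto simp: adj_def intro: rtranclp.rtrancl_into_rtrancl)
  qed
  thus ?thesis by simp
qed

lemma conn_finite_edges:
  assumes "conn V E x y" shows "\<exists>P. finite P \<and> P \<subseteq> E \<and> conn V P x y"
  using assms unfolding conn_def
proof (induction rule: rtranclp_induct)
  case base thus ?case by (intro exI[of _ "{}"]) auto
next
  case (step y z)
  then obtain P where P: "finite P" "P \<subseteq> E" "(adj V P)\<^sup>*\<^sup>* x y" by blast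
  have "(adj V (insert {y,z} P))\<^sup>*\<^sup>* x y"
    using conn_mono[of V P x y V "insert {y,z} P"] P(3) unfolding conn_def by auto
  moreover have "adj V (insert {y,z} P) y z" using step(2) by (auto simp: adj_def)
  ultimately have "(adj V (insert {y,z} P))\<^sup>*\<^sup>* x z" by (meson rtranclp.rtrancl_into_rtrancl)
  moreover have "{y,z} \<in> E" using step(2) by (auto simp: adj_def)
  ultimately show ?case using P
    by (intro exI[of _ "insert {y,z} P"]) auto
qed

lemma ray_edge_inj: assumes "ray V E r" shows "inj (\<lambda>i. {r i, r (Suc i)})"
proof (rule injI)
  fix i j assume "{r i, r (Suc i)} = {r j, r (Suc j)}"
  moreover have "inj r" using assms by (simp add: ray_def)
  ultimately have "(r i = r j \<and> r (Suc i) = r (Suc j)) \<or> (r i = r (Suc j) \<and> r (Suc i) = r j)"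
    by (simp add: doubleton_eq_iff)
  with \<open>inj r\<close> show "i = j" by (auto simp: inj_eq)
qed

lemma ray_tail_avoid:
  assumes "ray V E r" "finite F" shows "\<exists>n. \<forall>i\<ge>n. {r i, r (Suc i)} \<notin> F"
proof -
  have "finite ((\<lambda>i. {r i, r (Suc i)}) -` F)"
    by (rule finite_vimageI[OF assms(2) ray_edge_inj[OF assms(1)]])
  then obtain n where "\<forall>i\<in>(\<lambda>i. {r i, r (Suc i)}) -` F. i < n"
    using finite_nat_set_iff_bounded by blast
  then have "\<forall>i. {r i, r (Suc i)} \<in> F \<longrightarrow> i < n" by simp
  thus ?thesis using not_le by blast
qed

lemma ray_tail_conn:
  assumes "ray V E r" "\<forall>i\<ge>n. {r i, r (Suc i)} \<notin> F" "i \<ge> n" "j \<ge> n"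
  shows "conn V (E - F) (r i) (r j)"
proof -
  have a: "conn V (E - F) (r n) (r (n + k))" for k
  proof (induction k)
    case 0 thus ?case by (simp add: conn_refl)
  next
    case (Suc k)
    have "adj V (E - F) (r (n+k)) (r (n + Suc k))"
      using assms(1,2) by (auto simp: adj_def ray_def)
    thus ?case using Suc conn_step by fastforce
  qed
  have "conn V (E - F) (r n) (r i)" "conn V (E - F) (r n) (r j)"
    using a[of "i - n"] a[of "j - n"] assms(3,4) by auto
  thus ?thesis by (meson conn_sym conn_trans)
qed

lemma edge_equiv_refl: assumes "ray V E r" shows "edge_equiv V E r r"
  unfolding edge_equiv_def
proof (intro allI impI)
  fix F assume "finite F \<and> F \<subseteq> E"
  then obtain m where m: "\<forall>i\<ge>m. {r i, r (Suc i)} \<notin> F" using ray_tail_avoid assms by blast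
  show "\<exists>n0. \<forall>i\<ge>n0. \<forall>j\<ge>n0. conn V (E - F) (r i) (r j)"
    by (rule exI[of _ m]) (auto intro: ray_tail_conn[OF assms m])
qed

lemma edge_equiv_sym: "edge_equiv V E r s \<Longrightarrow> edge_equiv V E s r"
  unfolding edge_equiv_def by (meson conn_sym)

lemma edge_equiv_trans: "edge_equiv V E r s \<Longrightarrow> edge_equiv V E s t \<Longrightarrow> edge_equiv V E r t"
  unfolding edge_equiv_def
proof (intro allI impI)
  fix F :: "'a set set" assume a: "\<forall>F. finite F \<and> F \<subseteq> E \<longrightarrow> (\<exists>n. \<forall>i\<ge>n. \<forall>j\<ge>n. conn V (E - F) (r i) (s j))"
    and b: "\<forall>F. finite F \<and> F \<subseteq> E \<longrightarrow> (\<exists>n. \<forall>i\<ge>n. \<forall>j\<ge>n. conn V (E - F) (s i) (t j))"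
    and F: "finite F \<and> F \<subseteq> E"
  obtain n1 where n1: "\<forall>i\<ge>n1. \<forall>j\<ge>n1. conn V (E - F) (r i) (s j)" using a F by blast
  obtain n2 where n2: "\<forall>i\<ge>n2. \<forall>j\<ge>n2. conn V (E - F) (s i) (t j)" using b F by blast
  show "\<exists>n. \<forall>i\<ge>n. \<forall>j\<ge>n. conn V (E - F) (r i) (t j)"
    by (rule exI[of _ "max n1 n2"]) (metis conn_trans max.bounded_iff n1 n2 order_refl)
qed

definition eclass :: "'v set \<Rightarrow> 'v set set \<Rightarrow> (nat \<Rightarrow> 'v) \<Rightarrow> (nat \<Rightarrow> 'v) set" where
  "eclass V E r = {s. ray V E s \<and> edge_equiv V E r s}"

lemma edge_ends_eq: "edge_ends V E = {eclass V E r | r. ray V E r}"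
  unfolding edge_ends_def eclass_def by simp

lemma eclass_in: "ray V E r \<Longrightarrow> eclass V E r \<in> edge_ends V E"
  unfolding edge_ends_eq by blast

lemma eclass_self: "ray V E r \<Longrightarrow> r \<in> eclass V E r"
  unfolding eclass_def by (simp add: edge_equiv_refl)

lemma edge_endsE:
  assumes "\<omega> \<in> edge_ends V E" obtains r where "ray V E r" "\<omega> = eclass V E r"
  using assms unfolding edge_ends_eq by blast

lemma end_ray: "\<omega> \<in> edge_ends V E \<Longrightarrow> r \<in> \<omega> \<Longrightarrow> ray V E r"
  by (auto elim!: edge_endsE simp: eclass_def)

lemma end_equiv: "\<omega> \<in> edge_ends V E \<Longrightarrow> r \<in> \<omega> \<Longrightarrow> s \<in> \<omega> \<Longrightarrow> edge_equiv V E r s"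
  by (auto elim!: edge_endsE simp: eclass_def) (meson edge_equiv_sym edge_equiv_trans)

lemma end_nonempty: "\<omega> \<in> edge_ends V E \<Longrightarrow> \<exists>r. r \<in> \<omega>"
  by (auto elim!: edge_endsE intro: eclass_self)

lemma end_eq_eclass: "\<omega> \<in> edge_ends V E \<Longrightarrow> r \<in> \<omega> \<Longrightarrow> \<omega> = eclass V E r"
  apply (erule edge_endsE)
  apply (auto simp: eclass_def intro: edge_equiv_trans edge_equiv_sym)
  done

lemma end_member: "\<omega> \<in> edge_ends V E \<Longrightarrow> r \<in> \<omega> \<Longrightarrow> ray V E s \<Longrightarrow> edge_equiv V E r s \<Longrightarrow> s \<in> \<omega>"
  using end_eq_eclass[of \<omega> V E r] by (auto simp: eclass_def)

lemma ends_eqI: "\<omega> \<in> edge_ends V E \<Longrightarrow> \<omega>' \<in> edge_ends V E \<Longrightarrow> r \<in> \<omega> \<Longrightarrow> s \<in> \<omega>'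
   \<Longrightarrow> edge_equiv V E r s \<Longrightarrow> \<omega> = \<omega>'"
  by (metis end_eq_eclass end_member end_ray)

lemma ray_shift: assumes "ray V E r" shows "ray V E (\<lambda>i. r (i + n))"
proof -
  have "inj (\<lambda>i. r (i + n))" using assms unfolding ray_def inj_def by force
  thus ?thesis using assms unfolding ray_def by simp
qed

lemma ray_shift_equiv: assumes "ray V E r" shows "edge_equiv V E r (\<lambda>i. r (i + n))"
  unfolding edge_equiv_def
proof (intro allI impI)
  fix F assume "finite F \<and> F \<subseteq> E"
  then obtain m where m: "\<forall>i\<ge>m. {r i, r (Suc i)} \<notin> F" using ray_tail_avoid assms by blast
  show "\<exists>n0. \<forall>i\<ge>n0. \<forall>j\<ge>n0. conn V (E - F) (r i) (r (j + n))"
    by (rule exI[of _ m]) (auto intro: ray_tail_conn[OF assms m])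
qed

lemma end_shift: "\<omega> \<in> edge_ends V E \<Longrightarrow> r \<in> \<omega> \<Longrightarrow> (\<lambda>i. r (i + n)) \<in> \<omega>"
  by (rule end_member[OF _ _ ray_shift ray_shift_equiv]) (auto intro: end_ray)



lemma embedding_generic:
  fixes f :: "'a \<Rightarrow> 'b"
  assumes A1: "A \<subseteq> \<Union>B1" and fZ: "f ` A \<subseteq> Z" and fB2: "f ` A \<subseteq> \<Union>B2"
    and inj: "inj_on f A"
    and cont: "\<And>x U. x \<in> A \<Longrightarrow> U \<in> B2 \<Longrightarrow> f x \<in> U \<Longrightarrow> \<exists>C\<in>B1. x \<in> C \<and> (\<forall>x'\<in>A \<inter> C. f x' \<in> U)"
    and opn: "\<And>x C. x \<in> A \<Longrightarrow> C \<in> B1 \<Longrightarrow> x \<in> C \<Longrightarrow> \<exists>U\<in>B2. f x \<in> U \<and> (\<forall>x'\<in>A. f x' \<in> U \<longrightarrow> x' \<in> C)"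
  shows "embedding_map (subtopology (topology_generated_by B1) A)
                       (subtopology (topology_generated_by B2) Z) f"
proof -
  define T1 where "T1 = subtopology (topology_generated_by B1) A"
  define T2 where "T2 = subtopology (topology_generated_by B2) Z"
  have ts1: "topspace T1 = A" using A1 unfolding T1_def by auto
  have ts2: "topspace (subtopology T2 (f ` A)) = f ` A" using fZ fB2 unfolding T2_def by auto
  have basic1: "openin T1 {x\<in>A. f x \<in> s}" if sB: "s \<in> B2" for s
  proof (subst openin_subopen, intro ballI)
    fix x assume xin: "x \<in> {x\<in>A. f x \<in> s}"
    then obtain C where C: "C \<in> B1" "x \<in> C" "\<forall>x'\<in>A \<inter> C. f x' \<in> s" using cont sB by blast
    have "openin T1 (C \<inter> A)" unfolding T1_def openin_subtopology
      using C(1) topology_generated_by_Basis by blast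
    thus "\<exists>T. openin T1 T \<and> x \<in> T \<and> T \<subseteq> {x \<in> A. f x \<in> s}"
      using C xin by (intro exI[of _ "C \<inter> A"]) auto
  qed
  have pre: "openin T1 {x\<in>A. f x \<in> U}" if "generate_topology_on B2 U" for U
    using that
  proof (induction rule: generate_topology_on.induct)
    case Empty thus ?case by simp
  next
    case (Int a b)
    have "{x\<in>A. f x \<in> a \<inter> b} = {x\<in>A. f x \<in> a} \<inter> {x\<in>A. f x \<in> b}" by auto
    thus ?case using Int by (simp add: openin_Int)
  next
    case (UN K)
    have "{x\<in>A. f x \<in> \<Union>K} = (\<Union>k\<in>K. {x\<in>A. f x \<in> k})" by auto
    thus ?case using UN by (auto intro: openin_Union)
  next
    case (Basis s) thus ?case by (rule basic1)
  qed
  have c1: "continuous_map T1 (topology_generated_by B2) f"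
    unfolding continuous_map ts1
    using fB2 pre by (auto simp: openin_topology_generated_by_iff)
  have c2: "continuous_map T1 (subtopology T2 (f ` A)) f"
    unfolding T2_def continuous_map_in_subtopology using c1 fZ ts1 by auto
  have basic2: "openin (subtopology T2 (f ` A)) (f ` (C \<inter> A))" if CB: "C \<in> B1" for C
  proof (subst openin_subopen, intro ballI)
    fix y assume "y \<in> f ` (C \<inter> A)"
    then obtain x where x: "x \<in> C" "x \<in> A" "y = f x" by blast
    then obtain U where U: "U \<in> B2" "f x \<in> U" "\<forall>x'\<in>A. f x' \<in> U \<longrightarrow> x' \<in> C"
      using opn CB by blast
    have "openin T2 (U \<inter> Z)" unfolding T2_def openin_subtopology
      using U(1) topology_generated_by_Basis by blast
    then have "openin (subtopology T2 (f ` A)) (U \<inter> Z \<inter> f ` A)"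
      unfolding openin_subtopology[of T2] by blast
    moreover have "U \<inter> Z \<inter> f ` A \<subseteq> f ` (C \<inter> A)" using U by auto
    moreover have "y \<in> U \<inter> Z \<inter> f ` A" using x U fZ by auto
    ultimately show "\<exists>T. openin (subtopology T2 (f ` A)) T \<and> y \<in> T \<and> T \<subseteq> f ` (C \<inter> A)"
      by blast
  qed
  have img: "openin (subtopology T2 (f ` A)) (f ` (T \<inter> A))" if "generate_topology_on B1 T" for T
    using that
  proof (induction rule: generate_topology_on.induct)
    case Empty thus ?case by simp
  next
    case (Int a b)
    have "f ` (a \<inter> b \<inter> A) = f ` (a \<inter> A) \<inter> f ` (b \<inter> A)"
      using inj unfolding inj_on_def by blast
    thus ?case using Int by (simp add: openin_Int)
  next
    case (UN K)
    have "f ` (\<Union>K \<inter> A) = (\<Union>k\<in>K. f ` (k \<inter> A))" by auto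
    thus ?case using UN by (auto intro: openin_Union)
  next
    case (Basis s) thus ?case by (rule basic2)
  qed
  have o2: "open_map T1 (subtopology T2 (f ` A)) f"
    unfolding open_map_def
  proof (intro allI impI)
    fix U assume "openin T1 U"
    then obtain T where "generate_topology_on B1 T" "U = T \<inter> A"
      unfolding T1_def openin_subtopology openin_topology_generated_by_iff by blast
    thus "openin (subtopology T2 (f ` A)) (f ` U)" using img by simp
  qed
  have "homeomorphic_map T1 (subtopology T2 (f ` A)) f"
    by (rule bijective_open_imp_homeomorphic_map[OF c2 o2]) (use ts1 ts2 inj in auto)
  thus ?thesis unfolding embedding_map_def T1_def T2_def
    using ts1 unfolding T1_def by simp
qed



lemma conn_induct[consumes 1, case_names base step]:
  assumes "conn V E x y" "P x" "\<And>y z. conn V E x y \<Longrightarrow> adj V E y z \<Longrightarrow> P y \<Longrightarrow> P z"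
  shows "P y"
  using assms(1) unfolding conn_def
  by (induction rule: rtranclp_induct) (auto intro: assms(2) assms(3)[unfolded conn_def])

lemma conn_map:
  assumes "conn V E x y" "\<And>p q. adj V E p q \<Longrightarrow> adj V' E' p q"
  shows "conn V' E' x y"
  using assms(1)
proof (induction rule: conn_induct)
  case base thus ?case by (rule conn_refl)
next
  case (step y z) show ?case by (rule conn_step[OF step(3) assms(2)[OF step(2)]])
qed

lemma ray_seg_conn:
  assumes "ray V E r" "a \<le> b" "\<And>k. a \<le> k \<Longrightarrow> k < b \<Longrightarrow> {r k, r (Suc k)} \<notin> F"
  shows "conn V (E - F) (r a) (r b)"
  using assms(2,3)
proof (induction b)
  case 0 thus ?case by (simp add: conn_refl)
next
  case (Suc b)
  show ?case
  proof (cases "a = Suc b")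
    case True thus ?thesis by (simp add: conn_refl)
  next
    case False
    then have ab: "a \<le> b" using Suc.prems by simp
    have "conn V (E - F) (r a) (r b)"
      by (rule Suc.IH[OF ab]) (use Suc.prems(2) in force)
    moreover have "adj V (E - F) (r b) (r (Suc b))"
      using assms(1) Suc.prems(2)[of b] ab by (auto simp: ray_def adj_def)
    ultimately show ?thesis by (rule conn_step)
  qed
qed

lemma graph_edge: "graph V E \<Longrightarrow> {a,b} \<in> E \<Longrightarrow> a \<noteq> b \<and> a \<in> V \<and> b \<in> V"
  unfolding graph_def by (metis doubleton_eq_iff insert_absorb2)

lemma graph_edgeE: "graph V E \<Longrightarrow> e \<in> E \<Longrightarrow> (\<And>a b. a \<noteq> b \<Longrightarrow> a \<in> V \<Longrightarrow> b \<in> V \<Longrightarrow> e = {a,b} \<Longrightarrow> P) \<Longrightarrow> P"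
  unfolding graph_def by blast

locale tcd =
  fixes V :: "'v set" and E :: "'v set set" and N :: "'n set" and ET :: "'n set set"
    and X :: "'n \<Rightarrow> 'v set"
  assumes gV: "graph V E" and cG: "connected_graph V E"
    and tcd: "tree_cut_decomp V E N ET X"
    and fa: "finite_adhesion E N ET X"
    and blocks: "X ` N = edge_blocks V E"
    and wit: "\<forall>t1 t2. {t1, t2} \<in> ET \<longrightarrow> (\<exists>x\<in>X t1. \<exists>y\<in>X t2. {x, y} \<in> E)"
begin

abbreviation side where "side e u \<equiv> tside N ET e u"
abbreviation W :: "'n set \<Rightarrow> 'v set" where "W S \<equiv> \<Union> (X ` S)"
abbreviation orient where "orient \<omega> e u \<equiv> oriented_towards N ET X \<omega> e u"
abbreviation Ad where "Ad a b \<equiv> adhesion E N ET X a b"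

lemma tree: "tree N ET" using tcd by (simp add: tree_cut_decomp_def)
lemma gT: "graph N ET" using tree by (simp add: tree_def)
lemma cT: "connected_graph N ET" using tree by (simp add: tree_def)
lemma bridge: "{x,y} \<in> ET \<Longrightarrow> \<not> conn N (ET - {{x,y}}) x y" using tree by (simp add: tree_def)
lemma Xne: "t \<in> N \<Longrightarrow> X t \<noteq> {}" using tcd by (simp add: tree_cut_decomp_def)
lemma XV: "W N = V" using tcd by (simp add: tree_cut_decomp_def)
lemma Xdisj: "t \<in> N \<Longrightarrow> s \<in> N \<Longrightarrow> t \<noteq> s \<Longrightarrow> X t \<inter> X s = {}"
  using tcd by (simp add: tree_cut_decomp_def)
lemma X_sub: "t \<in> N \<Longrightarrow> X t \<subseteq> V" using XV by blast
lemma W_sub: "S \<subseteq> N \<Longrightarrow> W S \<subseteq> V" using XV by blast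

lemma ET_edge: "{a,b} \<in> ET \<Longrightarrow> a \<noteq> b \<and> a \<in> N \<and> b \<in> N" using graph_edge[OF gT] .
lemma E_edge: "{a,b} \<in> E \<Longrightarrow> a \<noteq> b \<and> a \<in> V \<and> b \<in> V" using graph_edge[OF gV] .
lemma connT: "a \<in> N \<Longrightarrow> b \<in> N \<Longrightarrow> conn N ET a b" using cT by (simp add: connected_graph_def)
lemma connG: "a \<in> V \<Longrightarrow> b \<in> V \<Longrightarrow> conn V E a b" using cG by (simp add: connected_graph_def)

lemma side_mem: "s \<in> side e u \<longleftrightarrow> s \<in> N \<and> conn N (ET - {e}) u s" by (simp add: tside_def)
lemma side_sub: "side e u \<subseteq> N" by (auto simp: tside_def)
lemma side_self: "u \<in> N \<Longrightarrow> u \<in> side e u" by (simp add: tside_def conn_refl)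
lemma side_trans: "s \<in> side e u \<Longrightarrow> conn N (ET - {e}) s s' \<Longrightarrow> s' \<in> side e u"
  unfolding side_mem by (meson conn_in conn_trans)
lemma side_switch: "s \<in> side e u \<Longrightarrow> side e s = side e u"
  unfolding tside_def by (auto intro: conn_trans conn_sym)

lemma side_disj: assumes "{a,b} \<in> ET" shows "side {a,b} a \<inter> side {a,b} b = {}"
proof (rule ccontr)
  assume "side {a,b} a \<inter> side {a,b} b \<noteq> {}"
  then obtain s where "conn N (ET - {{a,b}}) a s" "conn N (ET - {{a,b}}) b s" by (auto simp: tside_def)
  then have "conn N (ET - {{a,b}}) a b" by (meson conn_sym conn_trans)
  thus False using bridge assms by blast
qed

lemma side_cover: assumes "{a,b} \<in> ET" "s \<in> N" shows "s \<in> side {a,b} a \<or> s \<in> side {a,b} b"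
proof -
  have aN: "a \<in> N" "b \<in> N" using ET_edge assms(1) by auto
  have "conn N ET a s" using connT aN assms by blast
  then have "conn N (ET - {{a,b}}) a s \<or> conn N (ET - {{a,b}}) b s"
  proof (induction rule: conn_induct)
    case base thus ?case by (simp add: conn_refl)
  next
    case (step y z)
    show ?case
    proof (cases "{y,z} = {a,b}")
      case True
      then have "z = a \<or> z = b" by (auto simp: doubleton_eq_iff)
      thus ?thesis by (auto simp: conn_refl)
    next
      case False
      then have yz: "adj N (ET - {{a,b}}) y z" using step(2) by (auto simp: adj_def)
      from step(3) show ?thesis
        using conn_step[OF _ yz, of a] conn_step[OF _ yz, of b] by blast
    qed
  qed
  thus ?thesis using assms(2) by (auto simp: tside_def)
qed

lemma side_other: "{a,b} \<in> ET \<Longrightarrow> s \<in> N \<Longrightarrow> s \<notin> side {a,b} a \<Longrightarrow> s \<in> side {a,b} b"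
  using side_cover by blast

lemma side_edge_same:
  assumes "{x,y} \<in> ET" "{x,y} \<noteq> e" "x \<in> side e u" shows "y \<in> side e u"
proof -
  have "adj N (ET - {e}) x y" using assms ET_edge[OF assms(1)] by (auto simp: adj_def)
  thus ?thesis using assms(3) side_trans conn_step conn_refl by metis
qed

lemma side_conn: assumes "s \<in> side e u" shows "conn (side e u) (ET - {e}) u s"
proof -
  have uN: "u \<in> N" using assms conn_in[OF conn_sym] by (auto simp: tside_def)
  have "conn N (ET - {e}) u s" using assms by (simp add: tside_def)
  then show ?thesis
  proof (rule conn_restrict)
    show "u \<in> side e u" using uN by (rule side_self)
    show "\<And>p q. p \<in> side e u \<Longrightarrow> adj N (ET - {e}) p q \<Longrightarrow> q \<in> side e u"
      using side_trans conn_step conn_refl by metis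
  qed
qed

lemma side_conn': "s \<in> side e u \<Longrightarrow> conn (side e u) ET u s"
  using conn_mono[OF side_conn order_refl Diff_subset] by blast

lemma conn_stays_side:
  assumes "conn S ET c s" "f \<in> ET" "\<not> f \<subseteq> S" "c \<in> side f u"
  shows "s \<in> side f u"
proof -
  have "conn N (ET - {f}) c s"
    using assms(1)
  proof (rule conn_map)
    fix p q assume "adj S ET p q"
    then show "adj N (ET - {f}) p q" using assms(3) ET_edge by (auto simp: adj_def)
  qed
  thus ?thesis using assms(4) side_trans by blast
qed

lemma first_step:
  assumes "t \<in> N" "s \<in> N" "t \<noteq> s"
  shows "\<exists>t'. {t,t'} \<in> ET \<and> s \<in> side {t,t'} t'"
proof -
  have "conn N ET t s" using connT assms by blast
  then have "s = t \<or> (\<exists>t'. {t,t'} \<in> ET \<and> s \<in> side {t,t'} t')"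
  proof (induction rule: conn_induct)
    case base thus ?case by simp
  next
    case (step z y)
    have zy: "{z,y} \<in> ET" "z \<in> N" "y \<in> N" using step(2) by (auto simp: adj_def)
    from step(3) show ?case
    proof
      assume "z = t"
      thus ?thesis using zy side_self by auto
    next
      assume "\<exists>t'. {t,t'} \<in> ET \<and> z \<in> side {t,t'} t'"
      then obtain t' where t': "{t,t'} \<in> ET" "z \<in> side {t,t'} t'" by blast
      show ?thesis
      proof (cases "{z,y} = {t,t'}")
        case True
        have "z \<noteq> t" using t' side_disj[OF t'(1)] side_self assms(1) by blast
        then have "y = t" using True by (auto simp: doubleton_eq_iff)
        thus ?thesis by simp
      next
        case False
        thus ?thesis using side_edge_same[OF zy(1) False t'(2)] t'(1) by blast
      qed
    qed
  qed
  thus ?thesis using assms(3) by blast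
qed

lemma exit_edge:
  assumes "x0 \<in> D" "x0 \<in> N" "w \<in> N"
  shows "w \<in> D \<or> (\<exists>c d. {c,d} \<in> ET \<and> c \<in> D \<and> d \<notin> D \<and> w \<in> side {c,d} d)"
proof -
  have "conn N ET x0 w" using connT assms by blast
  thus ?thesis
  proof (induction rule: conn_induct)
    case base thus ?case using assms(1) by simp
  next
    case (step z y)
    have zy: "{z,y} \<in> ET" "z \<in> N" "y \<in> N" using step(2) by (auto simp: adj_def)
    show ?case
    proof (cases "y \<in> D")
      case True thus ?thesis by simp
    next
      case yD: False
      from step(3) show ?thesis
      proof
        assume "z \<in> D"
        thus ?thesis using zy yD side_self by blast
      next
        assume "\<exists>c d. {c,d} \<in> ET \<and> c \<in> D \<and> d \<notin> D \<and> z \<in> side {c,d} d"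
        then obtain c d where cd: "{c,d} \<in> ET" "c \<in> D" "d \<notin> D" "z \<in> side {c,d} d" by blast
        show ?thesis
        proof (cases "{z,y} = {c,d}")
          case True
          then have "y = d" using yD cd(2) by (auto simp: doubleton_eq_iff)
          thus ?thesis using cd side_self ET_edge by blast
        next
          case False
          thus ?thesis using side_edge_same[OF zy(1) False cd(4)] cd by blast
        qed
      qed
    qed
  qed
qed

abbreviation qe :: "(nat \<Rightarrow> 'n) \<Rightarrow> nat \<Rightarrow> 'n set" where "qe q i \<equiv> {q i, q (Suc i)}"

lemma tray_edge: "ray N ET q \<Longrightarrow> qe q i \<in> ET" by (simp add: ray_def)
lemma tray_N: "ray N ET q \<Longrightarrow> q i \<in> N" by (simp add: ray_def)

lemma tray_before: assumes "ray N ET q" "j \<le> i" shows "q j \<in> side (qe q i) (q i)"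
proof -
  have "conn N (ET - {qe q i}) (q j) (q i)"
  proof (rule ray_seg_conn[OF assms(1,2)])
    fix k assume "j \<le> k" "k < i"
    then show "qe q k \<notin> {qe q i}" using injD[OF ray_edge_inj[OF assms(1)], of k i] by auto
  qed
  thus ?thesis using tray_N[OF assms(1)] by (simp add: tside_def conn_sym)
qed

lemma tray_after: assumes "ray N ET q" "i < j" shows "q j \<in> side (qe q i) (q (Suc i))"
proof -
  have "conn N (ET - {qe q i}) (q (Suc i)) (q j)"
  proof (rule ray_seg_conn[OF assms(1)])
    show "Suc i \<le> j" using assms(2) by simp
    fix k assume "Suc i \<le> k" "k < j"
    then show "qe q k \<notin> {qe q i}" using injD[OF ray_edge_inj[OF assms(1)], of k i] by auto
  qed
  thus ?thesis using tray_N[OF assms(1)] by (simp add: tside_def)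
qed

lemma tray_leaves:
  assumes "ray N ET q" "finite K" "K \<subseteq> N"
  shows "\<exists>i\<ge>n0. \<forall>k\<in>K. k \<in> side (qe q i) (q i)"
proof -
  have "\<forall>k\<in>K. \<exists>P. finite P \<and> P \<subseteq> ET \<and> conn N P (q 0) k"
  proof
    fix k assume "k \<in> K"
    then have "conn N ET (q 0) k" using assms(3) connT tray_N[OF assms(1)] by blast
    thus "\<exists>P. finite P \<and> P \<subseteq> ET \<and> conn N P (q 0) k" by (rule conn_finite_edges)
  qed
  then obtain P where P: "\<And>k. k \<in> K \<Longrightarrow> finite (P k) \<and> P k \<subseteq> ET \<and> conn N (P k) (q 0) k"
    by metis
  define PP where "PP = (\<Union>k\<in>K. P k)"
  have fPP: "finite PP" using P assms(2) by (auto simp: PP_def)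
  obtain m where m: "\<forall>i\<ge>m. qe q i \<notin> PP" using ray_tail_avoid[OF assms(1) fPP] by blast
  define i where "i = max m n0"
  have "\<forall>k\<in>K. k \<in> side (qe q i) (q i)"
  proof
    fix k assume k: "k \<in> K"
    have "conn N (ET - {qe q i}) (q 0) k"
      using P[OF k] m by (elim conjE conn_mono) (auto simp: PP_def i_def k)
    moreover have "q 0 \<in> side (qe q i) (q i)" using tray_before[OF assms(1)] by simp
    ultimately show "k \<in> side (qe q i) (q i)" using side_trans by blast
  qed
  thus ?thesis by (intro exI[of _ i]) (simp add: i_def)
qed

lemma tray_side:
  assumes "ray N ET q" "{a,b} \<in> ET"
  shows "has_tail_in q (side {a,b} a) \<or> has_tail_in q (side {a,b} b)"
proof -
  obtain n where n: "\<forall>i\<ge>n. qe q i \<notin> {{a,b}}" using ray_tail_avoid[OF assms(1)] by blast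
  have c: "\<And>i. i \<ge> n \<Longrightarrow> conn N (ET - {{a,b}}) (q n) (q i)"
    using ray_tail_conn[OF assms(1) n] by simp
  have "q n \<in> side {a,b} a \<or> q n \<in> side {a,b} b" using side_cover[OF assms(2) tray_N[OF assms(1)]] .
  thus ?thesis unfolding has_tail_in_def using c side_trans by blast
qed

lemma tequiv_side:
  assumes "edge_equiv N ET q q'" "e \<in> ET" "has_tail_in q (side e u)"
  shows "has_tail_in q' (side e u)"
proof -
  obtain n where n: "\<forall>i\<ge>n. \<forall>j\<ge>n. conn N (ET - {e}) (q i) (q' j)"
    using assms(1,2) unfolding edge_equiv_def by (metis empty_subsetI finite.emptyI finite_insert insert_subset)
  obtain m where m: "\<forall>i\<ge>m. q i \<in> side e u" using assms(3) by (auto simp: has_tail_in_def)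
  have "\<forall>j\<ge>n. q' j \<in> side e u"
    using n m side_trans by (metis max.cobounded1 max.cobounded2)
  thus ?thesis by (auto simp: has_tail_in_def)
qed

end


context tcd begin

definition nd :: "'v \<Rightarrow> 'n" where "nd x = (THE t. t \<in> N \<and> x \<in> X t)"

lemma nd: assumes "x \<in> V" shows "nd x \<in> N \<and> x \<in> X (nd x)"
proof -
  obtain t where t: "t \<in> N" "x \<in> X t" using assms XV by blast
  have "nd x = t" unfolding nd_def
  proof (rule the_equality)
    show "t \<in> N \<and> x \<in> X t" using t by simp
    show "\<And>s. s \<in> N \<and> x \<in> X s \<Longrightarrow> s = t" using Xdisj t by blast
  qed
  thus ?thesis using t by simp
qed

lemma nd_eq: "t \<in> N \<Longrightarrow> x \<in> X t \<Longrightarrow> nd x = t"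
  using nd[of x] X_sub Xdisj by blast

lemma ET_ex: "e \<in> ET \<Longrightarrow> \<exists>a b. a \<noteq> b \<and> a \<in> N \<and> b \<in> N \<and> e = {a,b}"
  using gT unfolding graph_def by blast

lemma E_ex: "g \<in> E \<Longrightarrow> \<exists>a b. a \<noteq> b \<and> a \<in> V \<and> b \<in> V \<and> g = {a,b}"
  using gV unfolding graph_def by blast

lemma edge_other: assumes "e \<in> ET" "u \<in> e" obtains u' where "u' \<noteq> u" "e = {u,u'}" "u \<in> N" "u' \<in> N"
proof -
  obtain a b where ab: "a \<noteq> b" "a \<in> N" "b \<in> N" "e = {a,b}" using ET_ex[OF assms(1)] by blast
  then have "u = a \<or> u = b" using assms(2) by auto
  thus ?thesis
  proof
    assume "u = a" thus ?thesis using that[of b] ab by auto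
  next
    assume "u = b" thus ?thesis using that[of a] ab by (auto simp: insert_commute)
  qed
qed

lemma edge_pair: "e \<in> ET \<Longrightarrow> u \<in> e \<Longrightarrow> u' \<in> e \<Longrightarrow> u \<noteq> u' \<Longrightarrow> e = {u,u'}"
  by (metis edge_other insertE singletonD)

lemma side_disj': assumes "e \<in> ET" "u \<in> e" "u' \<in> e" "u \<noteq> u'" shows "side e u \<inter> side e u' = {}"
proof -
  have e: "e = {u,u'}" using edge_pair[OF assms] .
  show ?thesis using side_disj[of u u'] assms(1) unfolding e by simp
qed

lemma side_cover': assumes "e \<in> ET" "u \<in> e" "u' \<in> e" "u \<noteq> u'" "s \<in> N"
  shows "s \<in> side e u \<or> s \<in> side e u'"
proof -
  have e: "e = {u,u'}" using edge_pair[OF assms(1-4)] .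
  show ?thesis using side_cover[of u u' s] assms(1,5) unfolding e by simp
qed

lemma W_side_disj: assumes "e \<in> ET" "u \<in> e" "u' \<in> e" "u \<noteq> u'"
  shows "W (side e u) \<inter> W (side e u') = {}"
proof -
  have "X s \<inter> X s' = {}" if "s \<in> side e u" "s' \<in> side e u'" for s s'
  proof -
    have "s \<noteq> s'" using side_disj'[OF assms] that by blast
    thus ?thesis using Xdisj that side_sub by blast
  qed
  thus ?thesis by blast
qed

lemma W_side_cover: "e \<in> ET \<Longrightarrow> u \<in> e \<Longrightarrow> u' \<in> e \<Longrightarrow> u \<noteq> u' \<Longrightarrow> x \<in> V \<Longrightarrow> x \<in> W (side e u) \<or> x \<in> W (side e u')"
  using nd[of x] side_cover'[of e u u' "nd x"] by blast

definition Ae :: "'n set \<Rightarrow> 'v set set" where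
  "Ae e = {g \<in> E. \<exists>x y. g = {x,y} \<and> (\<exists>u\<in>e. \<exists>u'\<in>e. u \<noteq> u' \<and> x \<in> W (side e u) \<and> y \<in> W (side e u'))}"

lemma Ae_sub: "Ae e \<subseteq> E" by (auto simp: Ae_def)

lemma Ae_I: "{x,y} \<in> E \<Longrightarrow> u \<in> e \<Longrightarrow> u' \<in> e \<Longrightarrow> u \<noteq> u' \<Longrightarrow> x \<in> W (side e u) \<Longrightarrow> y \<in> W (side e u') \<Longrightarrow> {x,y} \<in> Ae e"
  unfolding Ae_def by blast

lemma Ae_fin: assumes "e \<in> ET" shows "finite (Ae e)"
proof -
  obtain a b where ab: "a \<noteq> b" "e = {a,b}" using ET_ex[OF assms] by blast
  have "Ae e \<subseteq> Ad a b"
  proof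
    fix g assume "g \<in> Ae e"
    then obtain x y u u' where g: "g \<in> E" "g = {x,y}" "u \<in> e" "u' \<in> e" "u \<noteq> u'"
      "x \<in> W (side e u)" "y \<in> W (side e u')" unfolding Ae_def by blast
    then have "(u = a \<and> u' = b) \<or> (u = b \<and> u' = a)" using ab by auto
    then show "g \<in> Ad a b"
    proof
      assume "u = a \<and> u' = b" thus ?thesis using g ab unfolding adhesion_def by blast
    next
      assume "u = b \<and> u' = a"
      moreover have "g = {y,x}" using g by auto
      ultimately show ?thesis using g ab unfolding adhesion_def by blast
    qed
  qed
  moreover have "finite (Ad a b)" using fa assms ab by (simp add: finite_adhesion_def)
  ultimately show ?thesis by (rule finite_subset)
qed

lemma adh_closed:
  assumes "e \<in> ET" "u \<in> e" "p \<in> W (side e u)" "adj V (E - Ae e) p q"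
  shows "q \<in> W (side e u)"
proof (rule ccontr)
  assume q: "q \<notin> W (side e u)"
  obtain u' where u': "u' \<noteq> u" "e = {u,u'}" using edge_other assms(1,2) by blast
  have pq: "q \<in> V" "{p,q} \<in> E" "{p,q} \<notin> Ae e" using assms(4) by (auto simp: adj_def)
  have "q \<in> W (side e u')" using W_side_cover[of e u u' q] assms u' pq q by auto
  then have "{p,q} \<in> Ae e" using Ae_I[OF pq(2) assms(2) _ _ assms(3)] u' by auto
  thus False using pq by blast
qed

lemma conn_avoid_adh:
  assumes "e \<in> ET" "u \<in> e" "conn V (E - Ae e) x y" "x \<in> W (side e u)"
  shows "y \<in> W (side e u)"
  using assms(3,4) by (rule conn_closed) (use adh_closed[OF assms(1,2)] in blast)

lemma insep_sym: "(x,y) \<in> edge_insep V E \<Longrightarrow> (y,x) \<in> edge_insep V E"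
  unfolding edge_insep_def by simp (meson conn_sym)

lemma insep_trans: "(x,y) \<in> edge_insep V E \<Longrightarrow> (y,z) \<in> edge_insep V E \<Longrightarrow> (x,z) \<in> edge_insep V E"
  unfolding edge_insep_def by simp (meson conn_trans)

lemma block_insep: assumes "t \<in> N" "x \<in> X t" "y \<in> X t" shows "(x,y) \<in> edge_insep V E"
proof -
  have "X t \<in> V // edge_insep V E" using blocks assms(1) by (auto simp: edge_blocks_def)
  then obtain z where "z \<in> V" "X t = edge_insep V E `` {z}" by (auto simp: quotient_def)
  then have "(z,x) \<in> edge_insep V E" "(z,y) \<in> edge_insep V E" using assms by auto
  thus ?thesis using insep_sym insep_trans by blast
qed

lemma insep_conn: assumes "(x,y) \<in> edge_insep V E" "finite F" shows "conn V (E - F) x y"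
proof -
  have "conn V (E - (F \<inter> E)) x y" using assms unfolding edge_insep_def by auto
  moreover have "E - (F \<inter> E) = E - F" by auto
  ultimately show ?thesis by simp
qed

lemma block_conn: "t \<in> N \<Longrightarrow> x \<in> X t \<Longrightarrow> y \<in> X t \<Longrightarrow> finite F \<Longrightarrow> conn V (E - F) x y"
  using block_insep insep_conn by blast

lemma W_conn_general:
  assumes S: "S \<subseteq> N" "a \<in> S" "\<And>s. s \<in> S \<Longrightarrow> conn S ET a s" and F: "finite F"
    and cl: "\<And>p q. p \<in> W S \<Longrightarrow> adj V (E - F) p q \<Longrightarrow> q \<in> W S"
    and xy: "x \<in> W S" "y \<in> W S"
  shows "conn (W S) E x y"
proof -
  have step1: "conn (W S) E x x'" if "s \<in> S" "x \<in> X s" "x' \<in> X s" for s x x'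
  proof -
    have "conn V (E - F) x x'" using block_conn[of s x x' F] that S(1) F by auto
    then have "conn (W S) (E - F) x x'" by (rule conn_restrict) (use that cl in auto)
    thus ?thesis by (rule conn_mono) auto
  qed
  obtain x0 where x0: "x0 \<in> X a" using Xne S by blast
  have main: "\<forall>y\<in>X s. conn (W S) E x0 y" if "conn S ET a s" for s
    using that
  proof (induction rule: conn_induct)
    case base thus ?case using step1 x0 S(2) by blast
  next
    case (step z s)
    have zs: "z \<in> S" "s \<in> S" "{z,s} \<in> ET" using step(2) by (auto simp: adj_def)
    obtain p q where pq: "p \<in> X z" "q \<in> X s" "{p,q} \<in> E" using wit zs(3) by blast
    have "conn (W S) E p q" using pq zs by (intro conn_edge) auto
    then have "conn (W S) E x0 q" using step(3) pq(1) by (meson conn_trans)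
    thus ?case using step1[OF zs(2) pq(2)] by (meson conn_trans)
  qed
  obtain s1 s2 where "s1 \<in> S" "x \<in> X s1" "s2 \<in> S" "y \<in> X s2" using xy by blast
  thus ?thesis using main S(3) by (meson conn_sym conn_trans)
qed

lemma W_side_conn:
  assumes "e \<in> ET" "u \<in> e" "x \<in> W (side e u)" "y \<in> W (side e u)"
  shows "conn (W (side e u)) E x y"
proof (rule W_conn_general)
  have uN: "u \<in> N" using edge_other[OF assms(1,2)] by blast
  show "side e u \<subseteq> N" by (rule side_sub)
  show "u \<in> side e u" using uN by (rule side_self)
  show "\<And>s. s \<in> side e u \<Longrightarrow> conn (side e u) ET u s" by (rule side_conn')
  show "finite (Ae e)" using assms(1) by (rule Ae_fin)
  show "\<And>p q. p \<in> W (side e u) \<Longrightarrow> adj V (E - Ae e) p q \<Longrightarrow> q \<in> W (side e u)"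
    using adh_closed[OF assms(1,2)] by blast
qed (use assms in auto)

lemma W_side_region:
  assumes "e \<in> ET" "u \<in> e"
  shows "region V E (W (side e u))"
proof -
  obtain u' where u': "u' \<noteq> u" "e = {u,u'}" "u \<in> N" "u' \<in> N" using edge_other assms by blast
  have ne: "W (side e u) \<noteq> {}" using Xne[OF u'(3)] side_self[OF u'(3)] by blast
  have "boundary E (W (side e u)) \<subseteq> Ae e"
  proof
    fix g assume g: "g \<in> boundary E (W (side e u))"
    then have gE: "g \<in> E" by (simp add: boundary_def)
    then obtain p q where pq: "p \<noteq> q" "p \<in> V" "q \<in> V" "g = {p,q}" using E_ex by blast
    have "(p \<in> W (side e u) \<and> q \<notin> W (side e u)) \<or> (q \<in> W (side e u) \<and> p \<notin> W (side e u))"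
      using g pq by (auto simp: boundary_def)
    thus "g \<in> Ae e"
    proof
      assume h: "p \<in> W (side e u) \<and> q \<notin> W (side e u)"
      then have "q \<in> W (side e u')" using W_side_cover[of e u u' q] assms u' pq by auto
      thus ?thesis using Ae_I[of p q u e u'] h gE pq u' assms by auto
    next
      assume h: "q \<in> W (side e u) \<and> p \<notin> W (side e u)"
      then have "p \<in> W (side e u')" using W_side_cover[of e u u' p] assms u' pq by auto
      moreover have "{q,p} \<in> E" using gE pq by (simp add: insert_commute)
      ultimately have "{q,p} \<in> Ae e" using Ae_I[of q p u e u'] h pq u' assms by auto
      thus ?thesis using pq by (simp add: insert_commute)
    qed
  qed
  then have "finite (boundary E (W (side e u)))" using Ae_fin[OF assms(1)] finite_subset by blast
  moreover have "W (side e u) \<subseteq> V" using W_sub side_sub by blast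
  ultimately show ?thesis
    unfolding region_def connected_graph_def using ne W_side_conn[OF assms] by blast
qed

lemma tail_disj: "has_tail_in r A \<Longrightarrow> has_tail_in r B \<Longrightarrow> A \<inter> B = {} \<Longrightarrow> False"
  unfolding has_tail_in_def by (metis disjoint_iff max.cobounded1 max.cobounded2)

lemma has_tail_mono: "has_tail_in r A \<Longrightarrow> A \<subseteq> B \<Longrightarrow> has_tail_in r B"
  unfolding has_tail_in_def by blast

lemma ray_G_side:
  assumes "ray V E r" "e \<in> ET" "u \<in> e" "u' \<in> e" "u \<noteq> u'"
  shows "has_tail_in r (W (side e u)) \<or> has_tail_in r (W (side e u'))"
proof -
  obtain n where n: "\<forall>i\<ge>n. {r i, r (Suc i)} \<notin> Ae e" using ray_tail_avoid[OF assms(1) Ae_fin[OF assms(2)]] by blast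
  have c: "\<And>i. i \<ge> n \<Longrightarrow> conn V (E - Ae e) (r n) (r i)"
    using ray_tail_conn[OF assms(1) n] by simp
  have "r n \<in> V" using assms(1) by (simp add: ray_def)
  then have "r n \<in> W (side e u) \<or> r n \<in> W (side e u')" using W_side_cover assms by blast
  moreover have "\<forall>i\<ge>n. r i \<in> W (side e u)" if "r n \<in> W (side e u)"
    using c conn_avoid_adh[OF assms(2,3) _ that] by blast
  moreover have "\<forall>i\<ge>n. r i \<in> W (side e u')" if "r n \<in> W (side e u')"
    using c conn_avoid_adh[OF assms(2,4) _ that] by blast
  ultimately show ?thesis unfolding has_tail_in_def by blast
qed

lemma Gequiv_side:
  assumes "edge_equiv V E r s" "e \<in> ET" "u \<in> e" "has_tail_in r (W (side e u))"
  shows "has_tail_in s (W (side e u))"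
proof -
  have "finite (Ae e) \<and> Ae e \<subseteq> E" using Ae_fin[OF assms(2)] Ae_sub by blast
  then obtain n where n: "\<forall>i\<ge>n. \<forall>j\<ge>n. conn V (E - Ae e) (r i) (s j)"
    using assms(1) unfolding edge_equiv_def by blast
  obtain m where m: "\<forall>i\<ge>m. r i \<in> W (side e u)" using assms(4) by (auto simp: has_tail_in_def)
  have "\<forall>j\<ge>n. s j \<in> W (side e u)"
  proof (intro allI impI)
    fix j assume "j \<ge> n"
    then have "conn V (E - Ae e) (r (max n m)) (s j)" using n by simp
    moreover have "r (max n m) \<in> W (side e u)" using m by simp
    ultimately show "s j \<in> W (side e u)" using conn_avoid_adh assms(2,3) by blast
  qed
  thus ?thesis by (auto simp: has_tail_in_def)
qed

lemma orient_iff: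
  assumes "\<omega> \<in> edge_ends V E" "r \<in> \<omega>" "e \<in> ET" "u \<in> e"
  shows "orient \<omega> e u \<longleftrightarrow> has_tail_in r (W (side e u))"
  using assms Gequiv_side[OF end_equiv[OF assms(1,2)] assms(3,4)]
  unfolding oriented_towards_def by blast

lemma orient_cases:
  assumes "\<omega> \<in> edge_ends V E" "e \<in> ET" "u \<in> e" "u' \<in> e" "u \<noteq> u'"
  shows "orient \<omega> e u \<or> orient \<omega> e u'"
proof -
  obtain r where r: "r \<in> \<omega>" using end_nonempty[OF assms(1)] by blast
  show ?thesis using ray_G_side[OF end_ray[OF assms(1) r] assms(2-5)]
      orient_iff[OF assms(1) r assms(2)] assms(3,4) by blast
qed

lemma orient_excl:
  assumes "\<omega> \<in> edge_ends V E" "e \<in> ET" "u \<in> e" "u' \<in> e" "u \<noteq> u'"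
    "orient \<omega> e u" "orient \<omega> e u'"
  shows False
proof -
  obtain r where r: "r \<in> \<omega>" using end_nonempty[OF assms(1)] by blast
  show False using orient_iff[OF assms(1) r assms(2)] assms tail_disj W_side_disj[OF assms(2-5)] by blast
qed

lemma Tor_iff:
  assumes "\<eta> \<in> edge_ends N ET" "q \<in> \<eta>" "e \<in> ET"
  shows "(\<forall>q'\<in>\<eta>. has_tail_in q' (side e u)) \<longleftrightarrow> has_tail_in q (side e u)"
  using assms tequiv_side[OF end_equiv[OF assms(1,2)] assms(3)] by blast

lemma pt_Inl: "points_to N ET X \<omega> (Inl t) \<longleftrightarrow> (\<forall>e\<in>ET. \<forall>u\<in>e. t \<in> side e u \<longrightarrow> orient \<omega> e u)"
  by (simp add: points_to_def)

lemma pt_Inr: "points_to N ET X \<omega> (Inr \<eta>) \<longleftrightarrow>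
    (\<forall>e\<in>ET. \<forall>u\<in>e. (\<forall>q\<in>\<eta>. has_tail_in q (side e u)) \<longrightarrow> orient \<omega> e u)"
  by (simp add: points_to_def)

end


lemma conn_ivt:
  assumes "conn S E a s" "\<not> Q a" "Q s"
  shows "\<exists>x y. adj S E x y \<and> \<not> Q x \<and> Q y"
proof -
  have "Q s \<longrightarrow> (\<exists>x y. adj S E x y \<and> \<not> Q x \<and> Q y)"
    using assms(1)
  proof (induction rule: conn_induct)
    case base thus ?case using assms(2) by simp
  next
    case (step z s) thus ?case by blast
  qed
  thus ?thesis using assms(3) by blast
qed

context tcd begin

lemma uniq_ll:
  assumes om: "\<omega> \<in> edge_ends V E" and tN: "t \<in> N" and sN: "s \<in> N"
    and pt: "points_to N ET X \<omega> (Inl t)" and ps: "points_to N ET X \<omega> (Inl s)"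
  shows "t = s"
proof (rule ccontr)
  assume ts: "t \<noteq> s"
  obtain t' where t': "{t,t'} \<in> ET" "s \<in> side {t,t'} t'" using first_step[OF tN sN ts] by blast
  have tt: "t \<noteq> t'" using ET_edge t'(1) by blast
  have "orient \<omega> {t,t'} t" using pt t'(1) side_self[OF tN] unfolding pt_Inl by blast
  moreover have "orient \<omega> {t,t'} t'" using ps t'(1,2) unfolding pt_Inl by blast
  ultimately show False using orient_excl[OF om t'(1), of t t'] tt by simp
qed

lemma uniq_lr:
  assumes om: "\<omega> \<in> edge_ends V E" and tN: "t \<in> N" and eta: "\<eta> \<in> edge_ends N ET"
    and pt: "points_to N ET X \<omega> (Inl t)" and pe: "points_to N ET X \<omega> (Inr \<eta>)"
  shows False
proof -
  obtain q where q: "q \<in> \<eta>" using end_nonempty[OF eta] by blast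
  have rq: "ray N ET q" using end_ray[OF eta q] .
  obtain i where i: "t \<in> side (qe q i) (q i)" using tray_leaves[OF rq, of "{t}" 0] tN by auto
  have f: "qe q i \<in> ET" "q i \<noteq> q (Suc i)" using tray_edge[OF rq] ET_edge by blast+
  have "orient \<omega> (qe q i) (q i)" using pt f(1) i unfolding pt_Inl by blast
  moreover have "has_tail_in q (side (qe q i) (q (Suc i)))"
    unfolding has_tail_in_def using tray_after[OF rq] by (intro exI[of _ "Suc i"]) auto
  then have "\<forall>q'\<in>\<eta>. has_tail_in q' (side (qe q i) (q (Suc i)))" using Tor_iff[OF eta q f(1)] by blast
  then have "orient \<omega> (qe q i) (q (Suc i))" using pe f(1) unfolding pt_Inr by blast
  ultimately show False using orient_excl[OF om f(1), of "q i" "q (Suc i)"] f(2) by simp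
qed

lemma uniq_rr:
  assumes om: "\<omega> \<in> edge_ends V E" and eta: "\<eta> \<in> edge_ends N ET" and eta': "\<eta>' \<in> edge_ends N ET"
    and pe: "points_to N ET X \<omega> (Inr \<eta>)" and pe': "points_to N ET X \<omega> (Inr \<eta>')"
  shows "\<eta> = \<eta>'"
proof (rule ccontr)
  assume ne: "\<eta> \<noteq> \<eta>'"
  obtain q where q: "q \<in> \<eta>" using end_nonempty[OF eta] by blast
  obtain q' where q': "q' \<in> \<eta>'" using end_nonempty[OF eta'] by blast
  have rq: "ray N ET q" using end_ray[OF eta q] .
  have rq': "ray N ET q'" using end_ray[OF eta' q'] .
  have "\<not> edge_equiv N ET q q'" using ends_eqI[OF eta eta' q q'] ne by blast
  then obtain F where F: "finite F" "F \<subseteq> ET" "\<not> (\<exists>n. \<forall>i\<ge>n. \<forall>j\<ge>n. conn N (ET - F) (q i) (q' j))"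
    unfolding edge_equiv_def by blast
  obtain n1 where n1: "\<forall>i\<ge>n1. qe q i \<notin> F" using ray_tail_avoid[OF rq F(1)] by blast
  obtain n2 where n2: "\<forall>i\<ge>n2. qe q' i \<notin> F" using ray_tail_avoid[OF rq' F(1)] by blast
  define m where "m = max n1 n2"
  have cq: "\<And>i. i \<ge> m \<Longrightarrow> conn N (ET - F) (q m) (q i)"
    using ray_tail_conn[OF rq n1] by (simp add: m_def)
  have cq': "\<And>i. i \<ge> m \<Longrightarrow> conn N (ET - F) (q' m) (q' i)"
    using ray_tail_conn[OF rq' n2] by (simp add: m_def)
  have nc: "\<not> conn N (ET - F) (q m) (q' m)"
  proof
    assume c: "conn N (ET - F) (q m) (q' m)"
    have "\<forall>i\<ge>m. \<forall>j\<ge>m. conn N (ET - F) (q i) (q' j)"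
      using c cq cq' by (meson conn_sym conn_trans)
    thus False using F(3) by blast
  qed
  define D where "D = {s. conn N (ET - F) (q m) s}"
  have "q' m \<in> D \<or> (\<exists>c d. {c,d} \<in> ET \<and> c \<in> D \<and> d \<notin> D \<and> q' m \<in> side {c,d} d)"
    by (rule exit_edge[of "q m"]) (auto simp: D_def conn_refl tray_N[OF rq] tray_N[OF rq'])
  then obtain c d where cd: "{c,d} \<in> ET" "c \<in> D" "d \<notin> D" "q' m \<in> side {c,d} d"
    using nc D_def by blast
  have cdN: "c \<noteq> d" "c \<in> N" "d \<in> N" using ET_edge[OF cd(1)] by auto
  have cdF: "{c,d} \<in> F"
  proof (rule ccontr)
    assume "{c,d} \<notin> F"
    then have "adj N (ET - F) c d" using cd(1) cdN by (auto simp: adj_def)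
    then have "d \<in> D" using cd(2) conn_step by (auto simp: D_def)
    thus False using cd(3) by blast
  qed
  have sub: "ET - F \<subseteq> ET - {{c,d}}" using cdF by blast
  have "conn N (ET - F) (q m) c" using cd(2) by (simp add: D_def)
  then have h: "conn N (ET - {{c,d}}) (q m) c" using conn_mono[OF _ order_refl sub] by blast
  have qm: "q m \<in> side {c,d} c"
    unfolding side_mem using tray_N[OF rq, of m] conn_sym[OF h] by simp
  have "\<forall>i\<ge>m. q i \<in> side {c,d} c"
  proof (intro allI impI)
    fix i assume "i \<ge> m"
    then have "conn N (ET - {{c,d}}) (q m) (q i)" using cq conn_mono[OF _ order_refl sub] by blast
    thus "q i \<in> side {c,d} c" using side_trans[OF qm] by blast
  qed
  then have "\<forall>q''\<in>\<eta>. has_tail_in q'' (side {c,d} c)"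
    using Tor_iff[OF eta q cd(1)] unfolding has_tail_in_def by blast
  then have o1: "orient \<omega> {c,d} c" using pe cd(1) unfolding pt_Inr by blast
  have "\<forall>i\<ge>m. q' i \<in> side {c,d} d"
  proof (intro allI impI)
    fix i assume "i \<ge> m"
    then have "conn N (ET - {{c,d}}) (q' m) (q' i)" using cq' conn_mono[OF _ order_refl sub] by blast
    thus "q' i \<in> side {c,d} d" using side_trans[OF cd(4)] by blast
  qed
  then have "\<forall>q''\<in>\<eta>'. has_tail_in q'' (side {c,d} d)"
    using Tor_iff[OF eta' q' cd(1)] unfolding has_tail_in_def by blast
  then have o2: "orient \<omega> {c,d} d" using pe' cd(1) unfolding pt_Inr by blast
  show False using orient_excl[OF om cd(1), of c d] o1 o2 cdN by simp
qed

lemma pt_unique: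
  assumes om: "\<omega> \<in> edge_ends V E" and z1: "z1 \<in> full_space N ET" "points_to N ET X \<omega> z1"
    and z2: "z2 \<in> full_space N ET" "points_to N ET X \<omega> z2"
  shows "z1 = z2"
proof -
  have A: "\<And>t \<eta>. t \<in> N \<Longrightarrow> \<eta> \<in> edge_ends N ET \<Longrightarrow> points_to N ET X \<omega> (Inl t) \<Longrightarrow> points_to N ET X \<omega> (Inr \<eta>) \<Longrightarrow> False"
    using uniq_lr[OF om] by blast
  have z1c: "(\<exists>t\<in>N. z1 = Inl t) \<or> (\<exists>\<eta>\<in>edge_ends N ET. z1 = Inr \<eta>)" using z1(1) by (auto simp: full_space_def)
  have z2c: "(\<exists>t\<in>N. z2 = Inl t) \<or> (\<exists>\<eta>\<in>edge_ends N ET. z2 = Inr \<eta>)" using z2(1) by (auto simp: full_space_def)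
  from z1c z2c show ?thesis
  proof (elim disjE bexE)
    fix t s assume "t \<in> N" "z1 = Inl t" "s \<in> N" "z2 = Inl s"
    thus ?thesis using uniq_ll[OF om, of t s] z1 z2 by simp
  next
    fix t \<eta> assume "t \<in> N" "z1 = Inl t" "\<eta> \<in> edge_ends N ET" "z2 = Inr \<eta>"
    thus ?thesis using A[of t \<eta>] z1 z2 by simp
  next
    fix t \<eta> assume "t \<in> N" "z2 = Inl t" "\<eta> \<in> edge_ends N ET" "z1 = Inr \<eta>"
    thus ?thesis using A[of t \<eta>] z1 z2 by simp
  next
    fix \<eta> \<eta>' assume "\<eta> \<in> edge_ends N ET" "z1 = Inr \<eta>" "\<eta>' \<in> edge_ends N ET" "z2 = Inr \<eta>'"
    thus ?thesis using uniq_rr[OF om, of \<eta> \<eta>'] z1 z2 by simp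
  qed
qed

lemma nosink:
  assumes om: "\<omega> \<in> edge_ends V E" and tN: "t \<in> N" and npt: "\<not> points_to N ET X \<omega> (Inl t)"
  shows "\<exists>t'. {t,t'} \<in> ET \<and> orient \<omega> {t,t'} t'"
proof (rule ccontr)
  assume H: "\<not> ?thesis"
  have Ht: "orient \<omega> {t,t'} t" if "{t,t'} \<in> ET" for t'
    using H that orient_cases[OF om that, of t t'] ET_edge[OF that] by auto
  have "points_to N ET X \<omega> (Inl t)" unfolding pt_Inl
  proof (intro ballI impI)
    fix e u assume e: "e \<in> ET" "u \<in> e" and te: "t \<in> side e u"
    obtain u' where u': "u' \<noteq> u" "e = {u,u'}" "u \<in> N" "u' \<in> N" using edge_other e by blast
    have u'e: "u' \<in> e" using u' by simp
    have dj: "side e u \<inter> side e u' = {}" using side_disj'[OF e u'e] u' by auto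
    have u'ns: "u' \<notin> side e u" using dj side_self[OF u'(4)] by blast
    show "orient \<omega> e u"
    proof (cases "t \<in> e")
      case True
      then have "t = u" using u' te u'ns by auto
      thus ?thesis using Ht e(1) u' by simp
    next
      case False
      have tu': "t \<noteq> u'" using False u'e by blast
      obtain t' where t': "{t,t'} \<in> ET" "u' \<in> side {t,t'} t'" using first_step[OF tN u'(4) tu'] by blast
      have tt': "t \<noteq> t'" using ET_edge t'(1) by blast
      have sub: "side e u' \<subseteq> side {t,t'} t'"
      proof
        fix s assume s: "s \<in> side e u'"
        have "conn (side e u') ET u' s" using side_conn'[OF s] .
        moreover have "\<not> {t,t'} \<subseteq> side e u'" using te dj by blast
        ultimately show "s \<in> side {t,t'} t'" using conn_stays_side t'(1) t'(2) by blast
      qed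
      show ?thesis
      proof (rule ccontr)
        assume "\<not> orient \<omega> e u"
        then have ou': "orient \<omega> e u'" using orient_cases[OF om e u'e] u' by auto
        obtain r where r: "r \<in> \<omega>" using end_nonempty om by blast
        have "has_tail_in r (W (side e u'))" using orient_iff[OF om r e(1) u'e] ou' by blast
        then have "has_tail_in r (W (side {t,t'} t'))" by (rule has_tail_mono) (use sub in blast)
        then have "orient \<omega> {t,t'} t'" using orient_iff[OF om r t'(1)] by simp
        moreover have "orient \<omega> {t,t'} t" using Ht t'(1) .
        ultimately show False using orient_excl[OF om t'(1), of t t'] tt' by simp
      qed
    qed
  qed
  thus False using npt by simp
qed

lemma pt_exists:
  assumes om: "\<omega> \<in> edge_ends V E"
  shows "\<exists>z\<in>full_space N ET. points_to N ET X \<omega> z"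
proof (cases "\<exists>t\<in>N. points_to N ET X \<omega> (Inl t)")
  case True thus ?thesis by (auto simp: full_space_def)
next
  case False
  then have ns: "\<And>t. t \<in> N \<Longrightarrow> \<exists>t'. {t,t'} \<in> ET \<and> orient \<omega> {t,t'} t'" using nosink[OF om] by blast
  obtain t0 where t0: "t0 \<in> N" using cT by (auto simp: connected_graph_def)
  define nxt where "nxt t = (SOME t'. {t,t'} \<in> ET \<and> orient \<omega> {t,t'} t')" for t
  define q where "q n = (nxt ^^ n) t0" for n
  have qS: "q (Suc n) = nxt (q n)" for n by (simp add: q_def)
  have qp: "q n \<in> N \<and> {q n, q (Suc n)} \<in> ET \<and> orient \<omega> {q n, q (Suc n)} (q (Suc n))" for n
  proof (induction n)
    case 0
    have "{t0, nxt t0} \<in> ET \<and> orient \<omega> {t0, nxt t0} (nxt t0)" unfolding nxt_def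
      by (rule someI_ex) (rule ns[OF t0])
    thus ?case using t0 by (simp add: q_def)
  next
    case (Suc n)
    have qn: "q (Suc n) \<in> N" using Suc ET_edge by blast
    have "{q (Suc n), nxt (q (Suc n))} \<in> ET \<and> orient \<omega> {q (Suc n), nxt (q (Suc n))} (nxt (q (Suc n)))"
      unfolding nxt_def by (rule someI_ex) (rule ns[OF qn])
    thus ?case using qn qS by simp
  qed
  have qN: "q n \<in> N" "qe q n \<in> ET" "q n \<noteq> q (Suc n)" for n using qp ET_edge by blast+
  have far: "q j \<in> side (qe q i) (q (Suc i))" if "i < j" for i j
    using that
  proof (induction j)
    case 0 thus ?case by simp
  next
    case (Suc j)
    show ?case
    proof (cases "i = j")
      case True thus ?thesis using side_self qN by auto
    next
      case False
      then have ij: "i < j" using Suc.prems by simp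
      have IH: "q j \<in> side (qe q i) (q (Suc i))" using Suc.IH[OF ij] .
      show ?thesis
      proof (cases "qe q j = qe q i")
        case False
        thus ?thesis using side_edge_same[OF qN(2) False IH] by blast
      next
        case True
        have qi: "q i \<in> side (qe q i) (q i)" using side_self qN by blast
        have dj: "side (qe q i) (q i) \<inter> side (qe q i) (q (Suc i)) = {}" by (rule side_disj) (rule qN(2))
        have "q j \<noteq> q i"
        proof
          assume "q j = q i" thus False using IH qi dj by auto
        qed
        then have "q j = q (Suc i) \<and> q (Suc j) = q i" using True by (auto simp: doubleton_eq_iff)
        then have "orient \<omega> (qe q i) (q i)" using qp[of j] True by simp
        moreover have "orient \<omega> (qe q i) (q (Suc i))" using qp[of i] by simp
        ultimately show ?thesis using orient_excl[OF om qN(2)[of i], of "q i" "q (Suc i)"] qN(3) by simp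
      qed
    qed
  qed
  have lt: "q i \<noteq> q j" if "i < j" for i j
  proof -
    have a: "q j \<in> side (qe q i) (q (Suc i))" using far that .
    have b: "q i \<in> side (qe q i) (q i)" using side_self qN by blast
    have dj: "side (qe q i) (q i) \<inter> side (qe q i) (q (Suc i)) = {}" by (rule side_disj) (rule qN(2))
    show ?thesis
    proof
      assume "q i = q j" thus False using a b dj by auto
    qed
  qed
  have injq: "inj q"
  proof (rule injI)
    fix i j assume e: "q i = q j"
    show "i = j"
    proof (rule ccontr)
      assume "i \<noteq> j"
      then have "i < j \<or> j < i" by arith
      thus False using lt e by metis
    qed
  qed
  have rq: "ray N ET q" unfolding ray_def using injq qN by blast
  define \<eta> where "\<eta> = eclass N ET q"
  have eta: "\<eta> \<in> edge_ends N ET" "q \<in> \<eta>" using eclass_in[OF rq] eclass_self[OF rq] by (auto simp: \<eta>_def)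
  have "points_to N ET X \<omega> (Inr \<eta>)" unfolding pt_Inr
  proof (intro ballI impI)
    fix e u assume e: "e \<in> ET" "u \<in> e" and T: "\<forall>q'\<in>\<eta>. has_tail_in q' (side e u)"
    obtain m0 where m0: "\<forall>i\<ge>m0. q i \<in> side e u" using T eta(2) by (auto simp: has_tail_in_def)
    obtain u' where u': "u' \<noteq> u" "e = {u,u'}" "u \<in> N" "u' \<in> N" using edge_other e by blast
    have u'e: "u' \<in> e" using u' by simp
    show "orient \<omega> e u"
    proof (rule ccontr)
      assume "\<not> orient \<omega> e u"
      then have ou': "orient \<omega> e u'" using orient_cases[OF om e u'e] u' by auto
      obtain i where i: "i \<ge> m0" "u' \<in> side (qe q i) (q i)" using tray_leaves[OF rq, of "{u'}" m0] u' by auto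
      have qi: "q i \<in> side e u" "q (Suc i) \<in> side e u" using m0 i by auto
      have dj: "side e u \<inter> side e u' = {}" using side_disj'[OF e u'e] u' by auto
      have sub: "side e u' \<subseteq> side (qe q i) (q i)"
      proof
        fix s assume s: "s \<in> side e u'"
        have "conn (side e u') ET u' s" using side_conn'[OF s] .
        moreover have "\<not> qe q i \<subseteq> side e u'" using qi dj by blast
        ultimately show "s \<in> side (qe q i) (q i)" using conn_stays_side qN(2) i(2) by blast
      qed
      obtain r where r: "r \<in> \<omega>" using end_nonempty om by blast
      have "has_tail_in r (W (side e u'))" using orient_iff[OF om r e(1) u'e] ou' by blast
      then have "has_tail_in r (W (side (qe q i) (q i)))" by (rule has_tail_mono) (use sub in blast)
      then have "orient \<omega> (qe q i) (q i)" using orient_iff[OF om r qN(2)] by simp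
      moreover have "orient \<omega> (qe q i) (q (Suc i))" using qp by simp
      ultimately show False using orient_excl[OF om qN(2)[of i], of "q i" "q (Suc i)"] qN(3) by simp
    qed
  qed
  thus ?thesis using eta by (auto simp: full_space_def)
qed

lemma phi_spec:
  assumes "\<omega> \<in> edge_ends V E"
  shows "phi N ET X \<omega> \<in> full_space N ET \<and> points_to N ET X \<omega> (phi N ET X \<omega>)"
proof -
  have "\<exists>!z. z \<in> full_space N ET \<and> points_to N ET X \<omega> z"
    using pt_exists[OF assms] pt_unique[OF assms] by blast
  thus ?thesis unfolding phi_def by (rule theI')
qed

lemma phi_eqI:
  "\<omega> \<in> edge_ends V E \<Longrightarrow> z \<in> full_space N ET \<Longrightarrow> points_to N ET X \<omega> z \<Longrightarrow> phi N ET X \<omega> = z"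
  using phi_spec pt_unique by blast

lemma dom_pt:
  assumes om: "\<omega> \<in> edge_ends V E" and dv: "edge_dominates V E v \<omega>"
  shows "points_to N ET X \<omega> (Inl (nd v))"
  unfolding pt_Inl
proof (intro ballI impI)
  fix e u assume e: "e \<in> ET" "u \<in> e" "nd v \<in> side e u"
  have vV: "v \<in> V" using dv by (simp add: edge_dominates_def)
  have vW: "v \<in> W (side e u)" using nd[OF vV] e(3) by blast
  show "orient \<omega> e u" unfolding oriented_towards_def
  proof
    fix r assume r: "r \<in> \<omega>"
    have "finite (Ae e) \<and> Ae e \<subseteq> E" using Ae_fin[OF e(1)] Ae_sub by blast
    then obtain n where n: "\<forall>i\<ge>n. conn V (E - Ae e) v (r i)"
      using dv r unfolding edge_dominates_def by blast
    thus "has_tail_in r (W (side e u))" unfolding has_tail_in_def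
      using conn_avoid_adh[OF e(1,2) _ vW] by blast
  qed
qed

lemma dom_phi:
  assumes "\<omega> \<in> edge_ends V E" "edge_dominates V E v \<omega>"
  shows "phi N ET X \<omega> = Inl (nd v)"
proof (rule phi_eqI[OF assms(1) _ dom_pt[OF assms]])
  have "v \<in> V" using assms(2) by (simp add: edge_dominates_def)
  thus "Inl (nd v) \<in> full_space N ET" using nd by (auto simp: full_space_def)
qed

lemma dom_block:
  assumes dv: "edge_dominates V E v \<omega>" and tN: "t \<in> N" and v: "v \<in> X t" and x: "x \<in> X t"
  shows "edge_dominates V E x \<omega>"
  unfolding edge_dominates_def
proof (intro conjI allI impI ballI)
  show "x \<in> V" using X_sub tN x by blast
  fix F r assume F: "finite F \<and> F \<subseteq> E" and r: "r \<in> \<omega>"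
  obtain n where n: "\<forall>i\<ge>n. conn V (E - F) v (r i)" using dv F r unfolding edge_dominates_def by blast
  have "conn V (E - F) x v" using block_conn[OF tN x v] F by blast
  thus "\<exists>n. \<forall>i\<ge>n. conn V (E - F) x (r i)" using n by (meson conn_trans)
qed

lemma sink_dominated:
  assumes om: "\<omega> \<in> edge_ends V E" and tN: "t \<in> N" and pt: "points_to N ET X \<omega> (Inl t)" and v: "v \<in> X t"
  shows "edge_dominates V E v \<omega>"
  unfolding edge_dominates_def
proof (intro conjI allI impI ballI)
  show "v \<in> V" using X_sub tN v by blast
  fix F r assume F: "finite F \<and> F \<subseteq> E" and r: "r \<in> \<omega>"
  have rr: "ray V E r" using end_ray om r .
  obtain n1 where n1: "\<forall>i\<ge>n1. {r i, r (Suc i)} \<notin> F" using ray_tail_avoid rr F by blast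
  have ct: "\<And>i. i \<ge> n1 \<Longrightarrow> conn V (E - F) (r n1) (r i)" using ray_tail_conn[OF rr n1] by simp
  show "\<exists>n. \<forall>i\<ge>n. conn V (E - F) v (r i)"
  proof (cases "conn V (E - F) v (r n1)")
    case True thus ?thesis using ct by (meson conn_trans)
  next
    case False
    define C' where "C' = {x. conn V (E - F) (r n1) x}"
    have rC: "\<And>i. i \<ge> n1 \<Longrightarrow> r i \<in> C'" using ct by (simp add: C'_def)
    have Ccl: "q \<in> C'" if "p \<in> C'" "adj V (E - F) p q" for p q
      using conn_step[of V "E-F" "r n1" p q] that by (simp add: C'_def)
    have Ccl': "\<And>p q. p \<in> C' \<Longrightarrow> {p,q} \<in> E \<Longrightarrow> {p,q} \<notin> F \<Longrightarrow> q \<in> C'"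
      using Ccl E_edge by (auto simp: adj_def)
    have XtC: "X t \<inter> C' = {}"
    proof (rule ccontr)
      assume "X t \<inter> C' \<noteq> {}"
      then obtain x where x: "x \<in> X t" "conn V (E - F) (r n1) x" by (auto simp: C'_def)
      have "conn V (E - F) v x" using block_conn[OF tN v x(1)] F by blast
      then have "conn V (E - F) v (r n1)" using x(2) by (meson conn_sym conn_trans)
      thus False using False by simp
    qed
    have blk: "X s \<subseteq> C'" if sN: "s \<in> N" and sC: "X s \<inter> C' \<noteq> {}" for s
    proof
      fix y assume y: "y \<in> X s"
      obtain x where x: "x \<in> X s" "x \<in> C'" using sC by blast
      have "conn V (E - F) x y" using block_conn[OF sN x(1) y] F by blast
      thus "y \<in> C'" using x(2) conn_trans[of V "E-F" "r n1" x y] by (simp add: C'_def)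
    qed
    define Br where "Br = {t'. {t,t'} \<in> ET \<and> W (side {t,t'} t') \<inter> C' \<noteq> {}}"
    have Bdisj: "W (side {t,t'} t') \<inter> W (side {t,t''} t'') = {}"
      if h1: "{t,t'} \<in> ET" and h2: "{t,t''} \<in> ET" and h3: "t' \<noteq> t''" for t' t''
    proof -
      have "side {t,t'} t' \<inter> side {t,t''} t'' = {}"
      proof (rule ccontr)
        assume "side {t,t'} t' \<inter> side {t,t''} t'' \<noteq> {}"
        then obtain s where s: "s \<in> side {t,t'} t'" "s \<in> side {t,t''} t''" by blast
        have t''N: "t'' \<in> N" using ET_edge h2 by blast
        have tt: "t \<in> side {t,t''} t" using side_self tN by blast
        have tnot: "t \<notin> side {t,t''} t''" using tt side_disj[OF h2] by blast
        have ne: "{t,t''} \<noteq> {t,t'}" using h3 by (auto simp: doubleton_eq_iff)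
        have "t'' \<in> side {t,t'} t" by (rule side_edge_same[OF h2 ne side_self[OF tN]])
        moreover have "conn (side {t,t''} t'') ET t'' s" using side_conn'[OF s(2)] .
        moreover have "\<not> {t,t'} \<subseteq> side {t,t''} t''" using tnot by blast
        ultimately have "s \<in> side {t,t'} t" using conn_stays_side h1 by blast
        thus False using s(1) side_disj[OF h1] by blast
      qed
      moreover have "side {t,t'} t' \<subseteq> N" "side {t,t''} t'' \<subseteq> N" using side_sub by blast+
      ultimately show ?thesis using Xdisj by blast
    qed
    have gex: "\<exists>y. y \<in> \<Union>F \<and> y \<in> W (side {t,t'} t')" if t'B: "t' \<in> Br" for t'
    proof -
      have tt': "{t,t'} \<in> ET" using t'B by (simp add: Br_def)
      have t'N: "t' \<in> N" using ET_edge tt' by blast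
      define S where "S = side {t,t'} t'"
      obtain s0 where s0: "s0 \<in> S" "X s0 \<inter> C' \<noteq> {}" using t'B by (auto simp: Br_def S_def)
      have s0N: "s0 \<in> N" using s0 side_sub S_def by blast
      have "conn S ET t' s0" using side_conn'[of s0] s0 by (simp add: S_def)
      then have c1: "conn (insert t S) ET t' s0" by (rule conn_mono) auto
      have "adj (insert t S) ET t t'" using tt' side_self[OF t'N] by (auto simp: adj_def S_def)
      then have "conn (insert t S) ET t s0" using c1 by (meson conn_step conn_refl conn_trans)
      moreover have "\<not> (X t \<subseteq> C')" using XtC Xne[OF tN] by blast
      moreover have "X s0 \<subseteq> C'" using blk[OF s0N s0(2)] .
      ultimately obtain a b where ab: "adj (insert t S) ET a b" "\<not> X a \<subseteq> C'" "X b \<subseteq> C'"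
        using conn_ivt[of "insert t S" ET t s0 "\<lambda>s. X s \<subseteq> C'"] by blast
      have abE: "{a,b} \<in> ET" "a \<in> N" "b \<in> N" using ab(1) ET_edge by (auto simp: adj_def)
      have bS: "b \<in> S" using ab(1,3) XtC Xne[OF tN] by (auto simp: adj_def)
      obtain p qq where pq: "p \<in> X a" "qq \<in> X b" "{p,qq} \<in> E" using wit abE(1) by blast
      have qC: "qq \<in> C'" using ab(3) pq(2) by blast
      have pC: "p \<notin> C'" using blk[OF abE(2)] ab(2) pq(1) by blast
      have "{qq,p} \<in> E" using pq(3) by (simp add: insert_commute)
      then have "{qq,p} \<in> F" using Ccl'[OF qC] pC by blast
      then have "qq \<in> \<Union>F" by blast
      moreover have "qq \<in> W S" using bS pq(2) by blast
      ultimately show ?thesis by (auto simp: S_def)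
    qed
    define g where "g t' = (SOME y. y \<in> \<Union>F \<and> y \<in> W (side {t,t'} t'))" for t'
    have gp: "g t' \<in> \<Union>F \<and> g t' \<in> W (side {t,t'} t')" if "t' \<in> Br" for t'
      unfolding g_def by (rule someI_ex) (rule gex[OF that])
    have finUF: "finite (\<Union>F)"
    proof -
      have "\<forall>e\<in>F. finite e" using F E_ex by fastforce
      thus ?thesis using F by blast
    qed
    have injg: "inj_on g Br"
    proof (rule inj_onI)
      fix a b assume ab: "a \<in> Br" "b \<in> Br" "g a = g b"
      show "a = b"
      proof (rule ccontr)
        assume "a \<noteq> b"
        then have dj: "W (side {t,a} a) \<inter> W (side {t,b} b) = {}"
          using Bdisj ab by (auto simp: Br_def)
        have m1: "g a \<in> W (side {t,a} a)" using gp[OF ab(1)] by (rule conjunct2)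
        have m2: "g a \<in> W (side {t,b} b)" using gp[OF ab(2)] ab(3) by simp
        have "g a \<in> W (side {t,a} a) \<inter> W (side {t,b} b)" using m1 m2 by (rule IntI)
        thus False using dj by simp
      qed
    qed
    have "g ` Br \<subseteq> \<Union>F" using gp by blast
    then have finBr: "finite Br"
      using inj_on_finite[OF injg _ finUF] by blast
    define F2 where "F2 = (\<Union>t'\<in>Br. Ae {t,t'})"
    have finF2: "finite F2" unfolding F2_def using finBr Ae_fin by (auto simp: Br_def)
    obtain n2 where n2: "\<forall>i\<ge>n2. {r i, r (Suc i)} \<notin> F2" using ray_tail_avoid[OF rr finF2] by blast
    define m where "m = max n1 n2"
    have rmV: "r m \<in> V" using rr by (simp add: ray_def)
    have ndm: "nd (r m) \<noteq> t" using nd[OF rmV] XtC rC[of m] by (auto simp: m_def)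
    obtain t' where t': "{t,t'} \<in> ET" "nd (r m) \<in> side {t,t'} t'"
      using first_step[OF tN _ ndm[symmetric]] nd[OF rmV] by blast
    have f: "t \<in> {t,t'}" "t' \<in> {t,t'}" "t \<noteq> t'" using ET_edge[OF t'(1)] by auto
    have tB: "t' \<in> Br" using t' nd[OF rmV] rC[of m] by (auto simp: Br_def m_def)
    have tail: "r (m + k) \<in> W (side {t,t'} t')" for k
    proof (induction k)
      case 0 thus ?case using t' nd[OF rmV] by auto
    next
      case (Suc k)
      have rV: "r (Suc (m + k)) \<in> V" using rr by (simp add: ray_def)
      show ?case
      proof (rule ccontr)
        assume "r (m + Suc k) \<notin> W (side {t,t'} t')"
        then have "r (Suc (m + k)) \<in> W (side {t,t'} t)"
          using W_side_cover[OF t'(1) f(2) f(1) f(3)[symmetric] rV] by simp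
        moreover have "{r (m+k), r (Suc (m+k))} \<in> E" using rr by (simp add: ray_def)
        ultimately have "{r (m+k), r (Suc (m+k))} \<in> Ae {t,t'}"
          using Ae_I[of "r (m+k)" "r (Suc (m+k))" t' "{t,t'}" t] Suc f by auto
        then have "{r (m+k), r (Suc (m+k))} \<in> F2" using tB by (auto simp: F2_def)
        thus False using n2 by (auto simp: m_def)
      qed
    qed
    have "has_tail_in r (W (side {t,t'} t'))"
      unfolding has_tail_in_def using tail by (metis le_add_diff_inverse)
    moreover have "orient \<omega> {t,t'} t" using pt t'(1) side_self[OF tN] unfolding pt_Inl by blast
    then have "has_tail_in r (W (side {t,t'} t))" using r unfolding oriented_towards_def by blast
    ultimately have False
      using tail_disj W_side_disj[OF t'(1) f(2) f(1) f(3)[symmetric]] by blast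
    thus ?thesis by blast
  qed
qed

end


lemma path_props:
  assumes "rtrancl_path R x xs y" "\<And>a b. R a b \<Longrightarrow> Pa a \<and> Pb b"
  shows "(\<forall>v\<in>set xs. Pb v) \<and> (\<forall>v\<in>set (butlast (x # xs)). Pa v)"
  using assms(1)
proof (induction rule: rtrancl_path.induct)
  case (base x) thus ?case by simp
next
  case (step x y ys z)
  thus ?case using assms(2)[OF step(1)] by (cases ys) auto
qed

lemma set_butlast_last: "xs \<noteq> [] \<Longrightarrow> set xs = set (butlast xs) \<union> {last xs}"
  by (metis append_butlast_last_id set_append empty_set list.simps(15) Un_insert_right sup_bot.right_neutral)

lemma nested_ray:
  fixes Wk :: "nat \<Rightarrow> 'v set"
  assumes mono: "\<And>k. Wk (Suc k) \<subseteq> Wk k"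
    and cn: "\<And>k x y. x \<in> Wk k \<Longrightarrow> y \<in> Wk k \<Longrightarrow> conn (Wk k) E x y"
    and ne: "\<And>k. Wk k \<noteq> {}"
    and out: "\<And>x. x \<in> Wk 0 \<Longrightarrow> \<exists>k. x \<notin> Wk k"
    and W0: "Wk 0 \<subseteq> V"
  shows "\<exists>r. ray V E r \<and> (\<forall>k. \<exists>n. \<forall>i\<ge>n. r i \<in> Wk k)"
proof -
  have monoo: "Wk k' \<subseteq> Wk k" if "k \<le> k'" for k k'
    using that by (induction rule: dec_induct) (use mono in blast)+
  have WV: "Wk k \<subseteq> V" for k using monoo[of 0 k] W0 by simp
  obtain x0 where x0: "x0 \<in> Wk 0" using ne by blast
  define Inv where "Inv s \<longleftrightarrow> rtrancl_path (adj V E) x0 (fst s) (last (x0 # fst s)) \<and> distinct (x0 # fst s)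
      \<and> last (x0 # fst s) \<in> Wk (snd s) \<and> (\<forall>v\<in>set (butlast (x0 # fst s)). v \<notin> Wk (snd s))" for s
  define Good where "Good s s' \<longleftrightarrow> (\<exists>P'. fst s' = fst s @ P' \<and> Inv s' \<and> snd s < snd s' \<and> P' \<noteq> [] \<and> set P' \<subseteq> Wk (snd s))" for s s'
  have step: "\<exists>s'. Good s s'" if inv: "Inv s" for s
  proof -
    obtain P m where s: "s = (P, m)" by (cases s)
    define y where "y = last (x0 # P)"
    have yW: "y \<in> Wk m" using inv by (simp add: Inv_def s y_def)
    obtain k where k: "y \<notin> Wk k" using out[of y] yW monoo[of 0 m] by blast
    define m' where "m' = max k (Suc m)"
    have ym': "y \<notin> Wk m'" using k monoo[of k m'] by (auto simp: m'_def)
    have mm': "m < m'" by (simp add: m'_def)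
    obtain w where w: "w \<in> Wk m'" using ne by blast
    have wm: "w \<in> Wk m" using w monoo[of m m'] mm' by auto
    have cyw: "conn (Wk m) E y w" using cn yW wm by blast
    define A where "A = Wk m'"
    define R where "R a b \<longleftrightarrow> adj (Wk m) E a b \<and> a \<notin> A" for a b
    have "R\<^sup>*\<^sup>* y w \<or> (\<exists>z\<in>A. R\<^sup>*\<^sup>* y z)"
      using cyw
    proof (induction rule: conn_induct)
      case base thus ?case by simp
    next
      case (step s s')
      from step(3) show ?case
      proof
        assume h: "R\<^sup>*\<^sup>* y s"
        show ?thesis
        proof (cases "s \<in> A")
          case True thus ?thesis using h by blast
        next
          case False
          then have "R s s'" using step(2) by (simp add: R_def)
          thus ?thesis using h by (meson rtranclp.rtrancl_into_rtrancl)
        qed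
      qed blast
    qed
    then obtain z where z: "z \<in> A" "R\<^sup>*\<^sup>* y z" using w by (auto simp: A_def)
    then obtain P0 where "rtrancl_path R y P0 z" using rtranclp_eq_rtrancl_path by metis
    then obtain P' where P': "rtrancl_path R y P' z" "distinct (y # P')"
      using rtrancl_path_distinct by metis
    have P'ne: "P' \<noteq> []"
    proof
      assume "P' = []"
      then have "y = z" using P'(1) by (auto elim: rtrancl_path.cases)
      thus False using z(1) ym' by (simp add: A_def)
    qed
    have props: "(\<forall>v\<in>set P'. v \<in> Wk m) \<and> (\<forall>v\<in>set (butlast (y # P')). v \<notin> A)"
      by (rule path_props[OF P'(1)]) (auto simp: R_def adj_def)
    have pathE: "rtrancl_path (adj V E) y P' z"
      by (rule rtrancl_path_mono[OF P'(1)]) (use WV in \<open>auto simp: R_def adj_def\<close>)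
    have lastz: "last P' = z" using rtrancl_path_last[OF P'(1) P'ne] .
    have pathP: "rtrancl_path (adj V E) x0 P y" using inv by (simp add: Inv_def s y_def)
    have newpath: "rtrancl_path (adj V E) x0 (P @ P') z" using rtrancl_path_trans[OF pathP pathE] .
    have lastnew: "last (x0 # P @ P') = z" using lastz P'ne by simp
    have dP: "distinct (x0 # P)" using inv by (simp add: Inv_def s)
    have bl: "\<forall>v\<in>set (butlast (x0 # P)). v \<notin> Wk m" using inv by (simp add: Inv_def s)
    have setx: "set (x0 # P) = set (butlast (x0 # P)) \<union> {y}"
      using set_butlast_last[of "x0 # P"] by (simp add: y_def)
    have disj: "set (x0 # P) \<inter> set P' = {}"
      using setx bl props P'(2) by auto
    have dnew: "distinct (x0 # P @ P')" using dP P'(2) disj by auto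
    have bnew: "butlast (x0 # P @ P') = (x0 # P) @ butlast P'" using P'ne by (simp add: butlast_append)
    have "\<forall>v\<in>set (butlast (x0 # P @ P')). v \<notin> Wk m'"
    proof
      fix v assume "v \<in> set (butlast (x0 # P @ P'))"
      then have "v \<in> set (x0 # P) \<or> v \<in> set (butlast P')" using bnew by auto
      thus "v \<notin> Wk m'"
      proof
        assume "v \<in> set (x0 # P)"
        then have "v \<in> set (butlast (x0 # P)) \<or> v = y" using setx by auto
        thus ?thesis using bl ym' monoo[of m m'] mm' by auto
      next
        assume "v \<in> set (butlast P')"
        moreover have "butlast (y # P') = y # butlast P'" using P'ne by simp
        ultimately show ?thesis using props by (auto simp: A_def)
      qed
    qed
    then have "Inv (P @ P', m')" unfolding Inv_def using newpath lastnew dnew z(1)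
      by (simp add: A_def)
    then have "Good s (P @ P', m')" unfolding Good_def using s mm' P'ne props by auto
    thus ?thesis by blast
  qed
  define nxt where "nxt s = (SOME s'. Good s s')" for s
  define st where "st k = (nxt ^^ k) ([], 0)" for k
  have stS: "st (Suc k) = nxt (st k)" for k by (simp add: st_def)
  have inv0: "Inv ([], 0)" unfolding Inv_def using x0 by (simp add: rtrancl_path.base)
  have invk: "Inv (st k) \<and> Good (st k) (st (Suc k))" for k
  proof (induction k)
    case 0
    have "Good ([], 0) (nxt ([], 0))" unfolding nxt_def by (rule someI_ex) (rule step[OF inv0])
    thus ?case using inv0 by (simp add: st_def Good_def)
  next
    case (Suc k)
    have i: "Inv (st (Suc k))" using Suc by (auto simp: Good_def)
    have "Good (st (Suc k)) (nxt (st (Suc k)))" unfolding nxt_def by (rule someI_ex) (rule step[OF i])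
    thus ?case using i stS by simp
  qed
  define Lk where "Lk k = x0 # fst (st k)" for k
  have grow: "\<exists>P'. Lk (Suc k) = Lk k @ P' \<and> snd (st k) < snd (st (Suc k)) \<and> P' \<noteq> [] \<and> set P' \<subseteq> Wk (snd (st k))" for k
    using invk[of k] by (auto simp: Good_def Lk_def)
  have len: "length (Lk k) \<ge> Suc k" for k
  proof (induction k)
    case 0 thus ?case by (simp add: Lk_def)
  next
    case (Suc k)
    obtain P' where P': "Lk (Suc k) = Lk k @ P'" "P' \<noteq> []" using grow by blast
    then have a: "length P' > 0" by simp
    have b: "length (Lk (Suc k)) = length (Lk k) + length P'" using P' by simp
    show ?case using Suc.IH a b by linarith
  qed
  have sndmono: "snd (st k) \<le> snd (st k')" if "k \<le> k'" for k k'
    using that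
  proof (induction rule: dec_induct)
    case base thus ?case by simp
  next
    case (step n) thus ?case using grow[of n] by auto
  qed
  have sndge: "snd (st k) \<ge> k" for k
  proof (induction k)
    case 0 thus ?case by simp
  next
    case (Suc k) thus ?case using grow[of k] by auto
  qed
  have pref: "\<exists>Q. Lk k' = Lk k @ Q" if "k \<le> k'" for k k'
    using that
  proof (induction rule: dec_induct)
    case base thus ?case by simp
  next
    case (step n)
    then obtain Q where "Lk n = Lk k @ Q" by blast
    moreover obtain P' where "Lk (Suc n) = Lk n @ P'" using grow by blast
    ultimately show ?case by auto
  qed
  have nth_pref: "Lk k' ! i = Lk k ! i" if "k \<le> k'" "i < length (Lk k)" for k k' i
    using pref[OF that(1)] that(2) by (auto simp: nth_append)
  have tailW: "Lk k' ! j \<in> Wk (snd (st k))"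
    if "k \<le> k'" "length (Lk k) - 1 \<le> j" "j < length (Lk k')" for k k' j
    using that
  proof (induction k' arbitrary: j rule: dec_induct)
    case base
    then have "j = length (Lk k) - 1" by simp
    moreover have "last (Lk k) \<in> Wk (snd (st k))" using invk[of k] by (simp add: Inv_def Lk_def)
    moreover have "Lk k \<noteq> []" by (simp add: Lk_def)
    ultimately show ?case by (simp add: last_conv_nth)
  next
    case (step n)
    obtain P' where P': "Lk (Suc n) = Lk n @ P'" "set P' \<subseteq> Wk (snd (st n))" using grow by blast
    show ?case
    proof (cases "j < length (Lk n)")
      case True thus ?thesis using step P' by (simp add: nth_append)
    next
      case False
      then have "Lk (Suc n) ! j \<in> set P'" using P' step.prems(2) by (auto simp: nth_append)
      then have "Lk (Suc n) ! j \<in> Wk (snd (st n))" using P' by blast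
      thus ?thesis using monoo[OF sndmono[OF step.hyps(1)]] by blast
    qed
  qed
  define r where "r i = Lk (Suc i) ! i" for i
  have r_eq: "r i = Lk k ! i" if "i < length (Lk k)" for i k
  proof -
    define K where "K = max k (Suc i)"
    have "Lk K ! i = Lk k ! i" using nth_pref[of k K i] that by (simp add: K_def)
    moreover have "Lk K ! i = Lk (Suc i) ! i" using nth_pref[of "Suc i" K i] len[of "Suc i"] by (simp add: K_def)
    ultimately show ?thesis by (simp add: r_def)
  qed
  have radj: "adj V E (r i) (r (Suc i))" for i
  proof -
    define K where "K = Suc (Suc i)"
    have l: "Suc i < length (Lk K)" using len[of K] by (simp add: K_def)
    have p: "rtrancl_path (adj V E) x0 (fst (st K)) (last (x0 # fst (st K)))"
      using invk[of K] by (simp add: Inv_def)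
    have "i < length (fst (st K))" using l by (simp add: Lk_def)
    then have "adj V E ((x0 # fst (st K)) ! i) (fst (st K) ! i)" using rtrancl_path_nth[OF p] by blast
    moreover have "r i = Lk K ! i" "r (Suc i) = Lk K ! Suc i" using r_eq l by auto
    ultimately show ?thesis by (simp add: Lk_def)
  qed
  have rinj: "inj r"
  proof (rule injI)
    fix i j assume e: "r i = r j"
    define K where "K = Suc (max i j)"
    have li: "i < length (Lk K)" "j < length (Lk K)" using len[of K] by (auto simp: K_def)
    have "Lk K ! i = Lk K ! j" using e r_eq li by simp
    moreover have "distinct (Lk K)" using invk[of K] by (simp add: Inv_def Lk_def)
    ultimately show "i = j" using li nth_eq_iff_index_eq by blast
  qed
  have "ray V E r" unfolding ray_def using rinj radj by (auto simp: adj_def)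
  moreover have "\<forall>k. \<exists>n. \<forall>i\<ge>n. r i \<in> Wk k"
  proof
    fix k
    show "\<exists>n. \<forall>i\<ge>n. r i \<in> Wk k"
    proof (intro exI allI impI)
      fix i assume i: "length (Lk k) - 1 \<le> i"
      define K where "K = max k (Suc i)"
      have l: "i < length (Lk K)" using len[of K] by (simp add: K_def)
      have "Lk K ! i \<in> Wk (snd (st k))" using tailW[of k K i] i l by (simp add: K_def)
      moreover have "Wk (snd (st k)) \<subseteq> Wk k" using monoo sndge by blast
      ultimately show "r i \<in> Wk k" using r_eq l by auto
    qed
  qed
  ultimately show ?thesis by blast
qed



context tcd begin

lemma finite_UF: assumes "finite F" "F \<subseteq> E" shows "finite (\<Union>F)"
proof -
  have "\<forall>e\<in>F. finite e" using assms E_ex by fastforce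
  thus ?thesis using assms by blast
qed

lemma UF_V: "F \<subseteq> E \<Longrightarrow> \<Union>F \<subseteq> V" using E_ex by blast

lemma good_index:
  assumes eta: "\<eta> \<in> edge_ends N ET" "q \<in> \<eta>" and K: "finite K" "K \<subseteq> N"
  shows "\<exists>i\<ge>n0. (\<forall>k\<in>K. k \<notin> side (qe q i) (q (Suc i))) \<and> (\<forall>q'\<in>\<eta>. has_tail_in q' (side (qe q i) (q (Suc i))))"
proof -
  have rq: "ray N ET q" using end_ray[OF eta] .
  obtain i where i: "i \<ge> n0" "\<forall>k\<in>K. k \<in> side (qe q i) (q i)" using tray_leaves[OF rq K] by blast
  have dj: "side (qe q i) (q i) \<inter> side (qe q i) (q (Suc i)) = {}" by (rule side_disj) (rule tray_edge[OF rq])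
  have "has_tail_in q (side (qe q i) (q (Suc i)))"
    unfolding has_tail_in_def using tray_after[OF rq] by (intro exI[of _ "Suc i"]) auto
  then have "\<forall>q'\<in>\<eta>. has_tail_in q' (side (qe q i) (q (Suc i)))"
    using Tor_iff[OF eta tray_edge[OF rq]] by blast
  moreover have "\<forall>k\<in>K. k \<notin> side (qe q i) (q (Suc i))" using i(2) dj by blast
  ultimately show ?thesis using i(1) by blast
qed

lemma clean_side:
  assumes eta: "\<eta> \<in> edge_ends N ET" and F: "finite F" "F \<subseteq> E"
  shows "\<exists>f u. f \<in> ET \<and> u \<in> f \<and> (\<forall>q\<in>\<eta>. has_tail_in q (side f u)) \<and> W (side f u) \<inter> \<Union>F = {}"
proof -
  obtain q where q: "q \<in> \<eta>" using end_nonempty[OF eta] by blast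
  have rq: "ray N ET q" using end_ray[OF eta q] .
  define K where "K = nd ` (\<Union>F)"
  have K: "finite K" "K \<subseteq> N" using finite_UF[OF F] UF_V[OF F(2)] nd by (auto simp: K_def)
  obtain i where i: "\<forall>k\<in>K. k \<notin> side (qe q i) (q (Suc i))" "\<forall>q'\<in>\<eta>. has_tail_in q' (side (qe q i) (q (Suc i)))"
    using good_index[OF eta q K, of 0] by blast
  have "W (side (qe q i) (q (Suc i))) \<inter> \<Union>F = {}"
  proof (rule ccontr)
    assume "W (side (qe q i) (q (Suc i))) \<inter> \<Union>F \<noteq> {}"
    then obtain x s where xs: "s \<in> side (qe q i) (q (Suc i))" "x \<in> X s" "x \<in> \<Union>F" by blast
    have "s \<in> N" using xs(1) side_sub by blast
    then have "nd x = s" using nd_eq xs(2) by blast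
    thus False using i(1) xs by (auto simp: K_def)
  qed
  thus ?thesis using i(2) tray_edge[OF rq] by (intro exI[of _ "qe q i"] exI[of _ "q (Suc i)"]) auto
qed

lemma W_clean_conn:
  assumes "f \<in> ET" "u \<in> f" "W (side f u) \<inter> \<Union>F = {}" "x \<in> W (side f u)" "y \<in> W (side f u)"
  shows "conn V (E - F) x y"
proof -
  have "conn (W (side f u)) E x y" using W_side_conn assms by blast
  thus ?thesis
  proof (rule conn_map)
    fix p q assume "adj (W (side f u)) E p q"
    moreover have "W (side f u) \<subseteq> V" using W_sub side_sub by blast
    ultimately show "adj V (E - F) p q" using assms(3) by (auto simp: adj_def)
  qed
qed

lemma phi_inj:
  assumes o1: "\<omega>1 \<in> edge_ends V E" and o2: "\<omega>2 \<in> edge_ends V E" and eq: "phi N ET X \<omega>1 = phi N ET X \<omega>2"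
  shows "\<omega>1 = \<omega>2"
proof -
  obtain r1 where r1: "r1 \<in> \<omega>1" using end_nonempty[OF o1] by blast
  obtain r2 where r2: "r2 \<in> \<omega>2" using end_nonempty[OF o2] by blast
  have s1: "phi N ET X \<omega>1 \<in> full_space N ET" "points_to N ET X \<omega>1 (phi N ET X \<omega>1)" using phi_spec[OF o1] by auto
  have s2: "points_to N ET X \<omega>2 (phi N ET X \<omega>1)" using phi_spec[OF o2] eq by auto
  have "edge_equiv V E r1 r2"
  proof (cases "\<exists>t\<in>N. phi N ET X \<omega>1 = Inl t")
    case True
    then obtain t where t: "t \<in> N" "phi N ET X \<omega>1 = Inl t" by blast
    obtain v where v: "v \<in> X t" using Xne[OF t(1)] by blast
    have d1: "edge_dominates V E v \<omega>1" using sink_dominated[OF o1 t(1) _ v] s1 t by simp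
    have d2: "edge_dominates V E v \<omega>2" using sink_dominated[OF o2 t(1) _ v] s2 t by simp
    show ?thesis unfolding edge_equiv_def
    proof (intro allI impI)
      fix F assume F: "finite F \<and> F \<subseteq> E"
      obtain n1 where n1: "\<forall>i\<ge>n1. conn V (E - F) v (r1 i)" using d1 F r1 unfolding edge_dominates_def by blast
      obtain n2 where n2: "\<forall>i\<ge>n2. conn V (E - F) v (r2 i)" using d2 F r2 unfolding edge_dominates_def by blast
      show "\<exists>n. \<forall>i\<ge>n. \<forall>j\<ge>n. conn V (E - F) (r1 i) (r2 j)"
        by (rule exI[of _ "max n1 n2"]) (meson conn_sym conn_trans max.boundedE n1 n2)
    qed
  next
    case False
    then obtain \<eta> where eta: "\<eta> \<in> edge_ends N ET" "phi N ET X \<omega>1 = Inr \<eta>"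
      using s1(1) by (auto simp: full_space_def)
    show ?thesis unfolding edge_equiv_def
    proof (intro allI impI)
      fix F assume F: "finite F \<and> F \<subseteq> E"
      have cs: "\<exists>f u. f \<in> ET \<and> u \<in> f \<and> (\<forall>q\<in>\<eta>. has_tail_in q (side f u)) \<and> W (side f u) \<inter> \<Union>F = {}"
        using clean_side[OF eta(1)] F by simp
      then obtain f u where fu: "f \<in> ET" "u \<in> f" "\<forall>q\<in>\<eta>. has_tail_in q (side f u)" "W (side f u) \<inter> \<Union>F = {}"
        by iprover
      have p1: "points_to N ET X \<omega>1 (Inr \<eta>)" using s1(2) eta(2) by simp
      have "orient \<omega>1 f u" using p1 fu unfolding pt_Inr by blast
      then obtain a where a: "\<forall>i\<ge>a. r1 i \<in> W (side f u)" using r1 unfolding oriented_towards_def has_tail_in_def by blast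
      have p2: "points_to N ET X \<omega>2 (Inr \<eta>)" using s2 eta(2) by simp
      have "orient \<omega>2 f u" using p2 fu unfolding pt_Inr by blast
      then obtain b where b: "\<forall>i\<ge>b. r2 i \<in> W (side f u)" using r2 unfolding oriented_towards_def has_tail_in_def by blast
      show "\<exists>n. \<forall>i\<ge>n. \<forall>j\<ge>n. conn V (E - F) (r1 i) (r2 j)"
      proof (intro exI[of _ "max a b"] allI impI)
        fix i j assume "max a b \<le> i" "max a b \<le> j"
        then show "conn V (E - F) (r1 i) (r2 j)" using W_clean_conn[OF fu(1,2,4)] a b by simp
      qed
    qed
  qed
  thus ?thesis using ends_eqI[OF o1 o2 r1 r2] by blast
qed

lemma side_region: assumes "f \<in> ET" "u \<in> f" shows "region N ET (side f u)"
proof -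
  have uN: "u \<in> N" using edge_other[OF assms] by blast
  have c: "conn (side f u) ET x y" if "x \<in> side f u" "y \<in> side f u" for x y
    using side_conn'[OF that(1)] side_conn'[OF that(2)] by (meson conn_sym conn_trans)
  have "boundary ET (side f u) \<subseteq> {f}"
  proof
    fix g assume g: "g \<in> boundary ET (side f u)"
    then have gE: "g \<in> ET" by (simp add: boundary_def)
    then obtain a b where ab: "a \<noteq> b" "a \<in> N" "b \<in> N" "g = {a,b}" using ET_ex by blast
    have "(a \<in> side f u \<and> b \<notin> side f u) \<or> (b \<in> side f u \<and> a \<notin> side f u)"
      using g ab by (auto simp: boundary_def)
    thus "g \<in> {f}"
    proof
      assume h: "a \<in> side f u \<and> b \<notin> side f u"
      show ?thesis using side_edge_same[of a b f u] gE ab h by auto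
    next
      assume h: "b \<in> side f u \<and> a \<notin> side f u"
      have "{b,a} \<in> ET" using gE ab by (simp add: insert_commute)
      then show ?thesis using side_edge_same[of b a f u] ab h by (auto simp: insert_commute)
    qed
  qed
  then have "finite (boundary ET (side f u))" using finite_subset by blast
  moreover have "side f u \<noteq> {}" using side_self[OF uN] by blast
  ultimately show ?thesis unfolding region_def connected_graph_def using side_sub c by blast
qed

lemma phi_oriented:
  assumes om: "\<omega> \<in> edge_ends V E" and f: "f \<in> ET" "u \<in> f" and o: "orient \<omega> f u"
  shows "(\<exists>s. phi N ET X \<omega> = Inl s \<and> s \<in> side f u) \<or>
         (\<exists>\<eta>. phi N ET X \<omega> = Inr \<eta> \<and> \<eta> \<in> edge_ends N ET \<and> (\<forall>q\<in>\<eta>. has_tail_in q (side f u)))"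
proof -
  obtain u' where u': "u' \<noteq> u" "f = {u,u'}" "u \<in> N" "u' \<in> N" using edge_other f by blast
  have u'f: "u' \<in> f" using u' by simp
  have sp: "phi N ET X \<omega> \<in> full_space N ET" "points_to N ET X \<omega> (phi N ET X \<omega>)" using phi_spec[OF om] by auto
  show ?thesis
  proof (cases "\<exists>s\<in>N. phi N ET X \<omega> = Inl s")
    case True
    then obtain s where s: "s \<in> N" "phi N ET X \<omega> = Inl s" by blast
    have "s \<in> side f u"
    proof (rule ccontr)
      assume "s \<notin> side f u"
      then have "s \<in> side f u'" using side_cover'[OF f u'f u'(1)[symmetric] s(1)] by blast
      moreover have "points_to N ET X \<omega> (Inl s)" using sp(2) s(2) by simp
      ultimately have "orient \<omega> f u'" using f u'f unfolding pt_Inl by blast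
      thus False using orient_excl[OF om f u'f u'(1)[symmetric] o] by blast
    qed
    thus ?thesis using s by blast
  next
    case False
    then obtain \<eta> where eta: "\<eta> \<in> edge_ends N ET" "phi N ET X \<omega> = Inr \<eta>" using sp(1) by (auto simp: full_space_def)
    obtain q where q: "q \<in> \<eta>" using end_nonempty[OF eta(1)] by blast
    have "has_tail_in q (side f u) \<or> has_tail_in q (side f u')"
      using tray_side[OF end_ray[OF eta(1) q], of u u'] f(1) u'(2) by simp
    moreover have "\<not> has_tail_in q (side f u')"
    proof
      assume "has_tail_in q (side f u')"
      then have "\<forall>q'\<in>\<eta>. has_tail_in q' (side f u')" using Tor_iff[OF eta(1) q f(1)] by blast
      moreover have "points_to N ET X \<omega> (Inr \<eta>)" using sp(2) eta(2) by simp
      ultimately have "orient \<omega> f u'" using f u'f unfolding pt_Inr by blast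
      thus False using orient_excl[OF om f u'f u'(1)[symmetric] o] by blast
    qed
    ultimately have "\<forall>q'\<in>\<eta>. has_tail_in q' (side f u)" using Tor_iff[OF eta(1) q f(1)] by blast
    thus ?thesis using eta by blast
  qed
qed

lemma end_in_region0:
  assumes "\<omega> \<in> edge_ends V' E'" "r \<in> \<omega>" "has_tail_in r C"
  shows "\<omega> \<in> region_ends V' E' C"
proof -
  obtain n where n: "\<forall>i\<ge>n. r i \<in> C" using assms(3) by (auto simp: has_tail_in_def)
  show ?thesis unfolding region_ends_def
  proof (intro CollectI conjI bexI[of _ "\<lambda>i. r (i + n)"])
    show "\<omega> \<in> edge_ends V' E'" by (rule assms(1))
    show "\<forall>i. r (i + n) \<in> C" using n by simp
    show "(\<lambda>i. r (i + n)) \<in> \<omega>" by (rule end_shift[OF assms(1,2)])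
  qed
qed

lemma end_in_region: "\<omega> \<in> edge_ends V E \<Longrightarrow> r \<in> \<omega> \<Longrightarrow> has_tail_in r C \<Longrightarrow> \<omega> \<in> region_ends V E C"
  by (rule end_in_region0)

lemma Tend_in_region: "\<eta> \<in> edge_ends N ET \<Longrightarrow> q \<in> \<eta> \<Longrightarrow> has_tail_in q D \<Longrightarrow> \<eta> \<in> region_ends N ET D"
  by (rule end_in_region0)

lemma region_closed:
  assumes "region V E C" "p \<in> C" "adj V (E - boundary E C) p q"
  shows "q \<in> C"
proof (rule ccontr)
  assume "q \<notin> C"
  then have "{p,q} \<in> boundary E C" using assms by (auto simp: adj_def boundary_def)
  thus False using assms(3) by (auto simp: adj_def)
qed

lemma exit_boundary:
  assumes D: "region N ET D" and a: "a \<in> D" and b: "b \<in> N" "b \<notin> D"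
  shows "\<exists>c d. {c,d} \<in> ET \<and> c \<in> D \<and> d \<notin> D \<and> c \<noteq> d \<and> b \<in> side {c,d} d \<and> D \<subseteq> side {c,d} c
          \<and> {c,d} \<in> boundary ET D"
proof -
  have DN: "D \<subseteq> N" using D by (simp add: region_def)
  obtain c d where cd: "{c,d} \<in> ET" "c \<in> D" "d \<notin> D" "b \<in> side {c,d} d"
    using exit_edge[OF a _ b(1)] DN a b(2) by blast
  have cdN: "c \<noteq> d" "c \<in> N" using ET_edge[OF cd(1)] by auto
  have "D \<subseteq> side {c,d} c"
  proof
    fix s assume s: "s \<in> D"
    have "conn D ET c s" using D cd(2) s by (simp add: region_def connected_graph_def)
    moreover have "\<not> {c,d} \<subseteq> D" using cd(3) by blast
    ultimately show "s \<in> side {c,d} c" using conn_stays_side cd(1) side_self[OF cdN(2)] by blast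
  qed
  moreover have "{c,d} \<in> boundary ET D" using cd by (auto simp: boundary_def)
  ultimately show ?thesis using cd cdN by blast
qed

definition FD :: "'n set \<Rightarrow> 'v set set" where "FD D = (\<Union>f\<in>boundary ET D. Ae f)"

lemma FD_fin: "region N ET D \<Longrightarrow> finite (FD D)"
  unfolding FD_def region_def using Ae_fin by (auto simp: boundary_def)

lemma FD_sub: "FD D \<subseteq> E" unfolding FD_def using Ae_sub by blast

lemma regionT_closedW:
  assumes D: "region N ET D" and p: "p \<in> W D" and pq: "adj V (E - FD D) p q"
  shows "q \<in> W D"
proof (rule ccontr)
  assume qn: "q \<notin> W D"
  obtain a where a: "a \<in> D" "p \<in> X a" using p by blast
  have qV: "q \<in> V" using pq by (simp add: adj_def)
  have ndq: "nd q \<in> N" "q \<in> X (nd q)" using nd[OF qV] by auto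
  have "nd q \<notin> D" using qn ndq by blast
  then obtain c d where cd: "{c,d} \<in> ET" "c \<noteq> d" "nd q \<in> side {c,d} d" "D \<subseteq> side {c,d} c" "{c,d} \<in> boundary ET D"
    using exit_boundary[OF D a(1) ndq(1)] by blast
  have "p \<in> W (side {c,d} c)" using a cd(4) by blast
  moreover have "q \<in> W (side {c,d} d)" using ndq cd(3) by blast
  moreover have "{p,q} \<in> E" using pq by (simp add: adj_def)
  ultimately have "{p,q} \<in> Ae {c,d}" using Ae_I[of p q c "{c,d}" d] cd(2) by auto
  then have "{p,q} \<in> FD D" using cd(5) by (auto simp: FD_def)
  thus False using pq by (simp add: adj_def)
qed

lemma phi_in_region:
  assumes D: "region N ET D" and om: "\<omega> \<in> edge_ends V E" and r: "r \<in> \<omega>" and rD: "\<forall>i. r i \<in> W D"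
  shows "phi N ET X \<omega> \<in> Inl ` D \<union> Inr ` region_ends N ET D"
proof -
  have sp: "phi N ET X \<omega> \<in> full_space N ET" "points_to N ET X \<omega> (phi N ET X \<omega>)" using phi_spec[OF om] by auto
  obtain t0 where t0: "t0 \<in> D" using D by (auto simp: region_def connected_graph_def)
  have bad: False if cd: "{c,d} \<in> ET" "c \<noteq> d" "D \<subseteq> side {c,d} c" and od: "orient \<omega> {c,d} d" for c d
  proof -
    have "has_tail_in r (W (side {c,d} c))" using rD cd(3) unfolding has_tail_in_def by blast
    then have "orient \<omega> {c,d} c" using orient_iff[OF om r cd(1)] by simp
    thus False using orient_excl[OF om cd(1), of c d] cd(2) od by simp
  qed
  show ?thesis
  proof (cases "\<exists>s\<in>N. phi N ET X \<omega> = Inl s")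
    case True
    then obtain s where s: "s \<in> N" "phi N ET X \<omega> = Inl s" by blast
    have "s \<in> D"
    proof (rule ccontr)
      assume "s \<notin> D"
      then obtain c d where cd: "{c,d} \<in> ET" "c \<noteq> d" "s \<in> side {c,d} d" "D \<subseteq> side {c,d} c"
        using exit_boundary[OF D t0 s(1)] by blast
      have "points_to N ET X \<omega> (Inl s)" using sp(2) s(2) by simp
      then have "orient \<omega> {c,d} d" using cd(1,3) unfolding pt_Inl by blast
      thus False using bad cd by blast
    qed
    thus ?thesis using s by blast
  next
    case False
    then obtain \<eta> where eta: "\<eta> \<in> edge_ends N ET" "phi N ET X \<omega> = Inr \<eta>" using sp(1) by (auto simp: full_space_def)
    obtain q where q: "q \<in> \<eta>" using end_nonempty[OF eta(1)] by blast
    have rq: "ray N ET q" using end_ray[OF eta(1) q] .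
    have fb: "finite (boundary ET D)" using D by (simp add: region_def)
    obtain n where n: "\<forall>i\<ge>n. qe q i \<notin> boundary ET D" using ray_tail_avoid[OF rq fb] by blast
    show ?thesis
    proof (cases "q n \<in> D")
      case True
      have "q (n + k) \<in> D" for k
      proof (induction k)
        case 0 thus ?case using True by simp
      next
        case (Suc k)
        show ?case
        proof (rule ccontr)
          assume "q (n + Suc k) \<notin> D"
          then have "qe q (n + k) \<in> boundary ET D" using Suc tray_edge[OF rq] by (auto simp: boundary_def)
          thus False using n by auto
        qed
      qed
      then have "has_tail_in q D" unfolding has_tail_in_def by (metis le_add_diff_inverse)
      thus ?thesis using Tend_in_region[OF eta(1) q] eta(2) by blast
    next
      case False
      then obtain c d where cd: "{c,d} \<in> ET" "c \<noteq> d" "q n \<in> side {c,d} d" "D \<subseteq> side {c,d} c" "{c,d} \<in> boundary ET D"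
        using exit_boundary[OF D t0 tray_N[OF rq]] by blast
      have "q (n + k) \<in> side {c,d} d" for k
      proof (induction k)
        case 0 thus ?case using cd by simp
      next
        case (Suc k)
        have "qe q (n + k) \<noteq> {c,d}" using n[rule_format, of "n+k"] cd(5) by auto
        thus ?case using side_edge_same[OF tray_edge[OF rq] _ Suc] by simp
      qed
      then have "has_tail_in q (side {c,d} d)" unfolding has_tail_in_def by (metis le_add_diff_inverse)
      then have "\<forall>q'\<in>\<eta>. has_tail_in q' (side {c,d} d)" using Tor_iff[OF eta(1) q cd(1)] by blast
      moreover have "points_to N ET X \<omega> (Inr \<eta>)" using sp(2) eta(2) by simp
      ultimately have "orient \<omega> {c,d} d" using cd(1) unfolding pt_Inr by blast
      thus ?thesis using bad cd by blast
    qed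
  qed
qed

end


context tcd begin

lemma cont_case:
  assumes om: "\<omega> \<in> edge_ends V E" and D: "region N ET D"
    and pin: "phi N ET X \<omega> \<in> Inl ` D \<union> Inr ` region_ends N ET D"
  shows "\<exists>C. region V E C \<and> \<omega> \<in> region_ends V E C \<and> C \<subseteq> W D"
proof -
  have sp: "phi N ET X \<omega> \<in> full_space N ET" "points_to N ET X \<omega> (phi N ET X \<omega>)" using phi_spec[OF om] by auto
  have DN: "D \<subseteq> N" using D by (simp add: region_def)
  from pin show ?thesis
  proof
    assume "phi N ET X \<omega> \<in> Inl ` D"
    then obtain t where t: "t \<in> D" "phi N ET X \<omega> = Inl t" by blast
    have tN: "t \<in> N" using t DN by blast
    have pt: "points_to N ET X \<omega> (Inl t)" using sp(2) t(2) by simp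
    obtain v where v: "v \<in> X t" using Xne[OF tN] by blast
    have dv: "edge_dominates V E v \<omega>" by (rule sink_dominated[OF om tN pt v])
    have vV: "v \<in> V" using X_sub tN v by blast
    define F where "F = FD D"
    have Ff: "finite F" "F \<subseteq> E" using FD_fin[OF D] FD_sub by (auto simp: F_def)
    define C where "C = {x. conn V (E - F) v x}"
    have vC: "v \<in> C" by (simp add: C_def conn_refl)
    have Ccl: "q \<in> C" if "p \<in> C" "adj V (E - F) p q" for p q
      using conn_step[of V "E - F" v p q] that by (simp add: C_def)
    have CW: "C \<subseteq> W D"
    proof
      fix x assume "x \<in> C"
      then have "conn V (E - F) v x" by (simp add: C_def)
      then show "x \<in> W D"
      proof (rule conn_closed)
        show "v \<in> W D" using v t by blast
        show "\<And>p q. p \<in> W D \<Longrightarrow> adj V (E - F) p q \<Longrightarrow> q \<in> W D"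
          using regionT_closedW[OF D] by (simp add: F_def)
      qed
    qed
    have CV: "C \<subseteq> V" using conn_in vV by (auto simp: C_def)
    have vx: "conn C E v x" if "x \<in> C" for x
    proof -
      have "conn V (E - F) v x" using that by (simp add: C_def)
      then have "conn C (E - F) v x" by (rule conn_restrict) (use vC Ccl in auto)
      thus ?thesis by (rule conn_mono) auto
    qed
    have Cconn: "conn C E x y" if "x \<in> C" "y \<in> C" for x y
      using vx[OF that(1)] vx[OF that(2)] by (meson conn_sym conn_trans)
    have "boundary E C \<subseteq> F"
    proof
      fix g assume g: "g \<in> boundary E C"
      then have gE: "g \<in> E" by (simp add: boundary_def)
      then obtain p q where pq: "p \<noteq> q" "p \<in> V" "q \<in> V" "g = {p,q}" using E_ex by blast
      have "(p \<in> C \<and> q \<notin> C) \<or> (q \<in> C \<and> p \<notin> C)" using g pq by (auto simp: boundary_def)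
      thus "g \<in> F"
      proof
        assume h: "p \<in> C \<and> q \<notin> C"
        show ?thesis
        proof (rule ccontr)
          assume "g \<notin> F"
          then have "adj V (E - F) p q" using gE pq by (auto simp: adj_def)
          thus False using Ccl h by blast
        qed
      next
        assume h: "q \<in> C \<and> p \<notin> C"
        show ?thesis
        proof (rule ccontr)
          assume "g \<notin> F"
          then have "adj V (E - F) q p" using gE pq by (auto simp: adj_def insert_commute)
          thus False using Ccl h by blast
        qed
      qed
    qed
    then have "finite (boundary E C)" using Ff finite_subset by blast
    then have regC: "region V E C" unfolding region_def connected_graph_def using CV vC Cconn by blast
    obtain r where r: "r \<in> \<omega>" using end_nonempty[OF om] by blast
    obtain n where "\<forall>i\<ge>n. conn V (E - F) v (r i)" using dv Ff r unfolding edge_dominates_def by blast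
    then have "has_tail_in r C" unfolding has_tail_in_def by (auto simp: C_def)
    then have "\<omega> \<in> region_ends V E C" by (rule end_in_region[OF om r])
    thus ?thesis using regC CW by blast
  next
    assume "phi N ET X \<omega> \<in> Inr ` region_ends N ET D"
    then obtain \<eta> where eta: "\<eta> \<in> region_ends N ET D" "phi N ET X \<omega> = Inr \<eta>" by blast
    have eta1: "\<eta> \<in> edge_ends N ET" using eta(1) by (simp add: region_ends_def)
    obtain q where q: "q \<in> \<eta>" "\<forall>i. q i \<in> D" using eta(1) by (auto simp: region_ends_def)
    have rq: "ray N ET q" using end_ray[OF eta1 q(1)] .
    define K where "K = \<Union> (boundary ET D)"
    have "\<forall>e\<in>boundary ET D. finite e \<and> e \<subseteq> N" using ET_ex by (fastforce simp: boundary_def)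
    then have K: "finite K" "K \<subseteq> N" using D by (auto simp: K_def region_def)
    obtain i where i: "\<forall>k\<in>K. k \<notin> side (qe q i) (q (Suc i))" "\<forall>q'\<in>\<eta>. has_tail_in q' (side (qe q i) (q (Suc i)))"
      using good_index[OF eta1 q(1) K, of 0] by blast
    define f where "f = qe q i"
    define u where "u = q (Suc i)"
    have fu: "f \<in> ET" "u \<in> f" using tray_edge[OF rq] by (auto simp: f_def u_def)
    have i1: "\<forall>k\<in>K. k \<notin> side f u" using i(1) by (simp add: f_def u_def)
    have i2: "\<forall>q'\<in>\<eta>. has_tail_in q' (side f u)" using i(2) by (simp add: f_def u_def)
    have SD: "side f u \<subseteq> D"
    proof
      fix s assume s: "s \<in> side f u"
      show "s \<in> D"
      proof (rule ccontr)
        assume sD: "s \<notin> D"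
        have "conn (side f u) ET u s" using side_conn'[OF s] .
        then obtain x y where xy: "adj (side f u) ET x y" "\<not> (x \<notin> D)" "y \<notin> D"
          using conn_ivt[of "side f u" ET u s "\<lambda>x. x \<notin> D"] q(2) sD by (auto simp: u_def)
        have "{x,y} \<in> boundary ET D" using xy by (auto simp: adj_def boundary_def)
        then have "y \<in> K" by (auto simp: K_def)
        moreover have "y \<in> side f u" using xy(1) by (simp add: adj_def)
        ultimately show False using i1 by blast
      qed
    qed
    have regC: "region V E (W (side f u))" by (rule W_side_region[OF fu])
    have pt: "points_to N ET X \<omega> (Inr \<eta>)" using sp(2) eta(2) by simp
    have o: "orient \<omega> f u" using pt fu i2 unfolding pt_Inr by blast
    obtain r where r: "r \<in> \<omega>" using end_nonempty[OF om] by blast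
    have "has_tail_in r (W (side f u))" using o r unfolding oriented_towards_def by blast
    then have "\<omega> \<in> region_ends V E (W (side f u))" by (rule end_in_region[OF om r])
    moreover have "W (side f u) \<subseteq> W D" using SD by blast
    ultimately show ?thesis using regC by blast
  qed
qed

lemma W_clean_sub:
  assumes C0: "region V E C0" and f: "f \<in> ET" "u \<in> f" and cl: "W (side f u) \<inter> \<Union>(boundary E C0) = {}"
    and x: "x \<in> W (side f u)" "x \<in> C0"
  shows "W (side f u) \<subseteq> C0"
proof
  fix y assume y: "y \<in> W (side f u)"
  have "conn V (E - boundary E C0) x y" using W_clean_conn[OF f cl x(1) y] .
  thus "y \<in> C0" using x(2) by (rule conn_closed) (use region_closed[OF C0] in blast)
qed

lemma dom_in_region:
  assumes C0: "region V E C0" and om: "\<omega> \<in> edge_ends V E" and dv: "edge_dominates V E x \<omega>" and xC: "x \<in> C0"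
  shows "\<omega> \<in> region_ends V E C0"
proof -
  obtain r where r: "r \<in> \<omega>" using end_nonempty[OF om] by blast
  have Ff: "finite (boundary E C0) \<and> boundary E C0 \<subseteq> E" using C0 by (auto simp: region_def boundary_def)
  obtain n where n: "\<forall>i\<ge>n. conn V (E - boundary E C0) x (r i)" using dv Ff r unfolding edge_dominates_def by blast
  have "\<forall>i\<ge>n. r i \<in> C0"
  proof (intro allI impI)
    fix i assume "i \<ge> n"
    then have "conn V (E - boundary E C0) x (r i)" using n by blast
    thus "r i \<in> C0" using xC by (rule conn_closed) (use region_closed[OF C0] in blast)
  qed
  then have "has_tail_in r C0" by (auto simp: has_tail_in_def)
  thus ?thesis by (rule end_in_region[OF om r])
qed

lemma open_case:
  assumes om: "\<omega> \<in> edge_ends V E" and C0: "region V E C0" and oC: "\<omega> \<in> region_ends V E C0"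
  shows "\<exists>D. region N ET D \<and> phi N ET X \<omega> \<in> Inl ` D \<union> Inr ` region_ends N ET D \<and>
     (\<forall>\<omega>'\<in>edge_ends V E. phi N ET X \<omega>' \<in> Inl ` D \<union> Inr ` region_ends N ET D \<longrightarrow> \<omega>' \<in> region_ends V E C0)"
proof -
  define F where "F = boundary E C0"
  have Ff: "finite F" "F \<subseteq> E" using C0 by (auto simp: F_def region_def boundary_def)
  have cl: "q \<in> C0" if "p \<in> C0" "adj V (E - F) p q" for p q using region_closed[OF C0] that by (simp add: F_def)
  obtain r where r: "r \<in> \<omega>" "\<forall>i. r i \<in> C0" using oC by (auto simp: region_ends_def)
  have sp: "phi N ET X \<omega> \<in> full_space N ET" "points_to N ET X \<omega> (phi N ET X \<omega>)" using phi_spec[OF om] by auto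
  show ?thesis
  proof (cases "\<exists>t\<in>N. phi N ET X \<omega> = Inl t")
    case False
    then obtain \<eta> where eta: "\<eta> \<in> edge_ends N ET" "phi N ET X \<omega> = Inr \<eta>" using sp(1) by (auto simp: full_space_def)
    have cs: "\<exists>f u. f \<in> ET \<and> u \<in> f \<and> (\<forall>q\<in>\<eta>. has_tail_in q (side f u)) \<and> W (side f u) \<inter> \<Union>F = {}"
      using clean_side[OF eta(1) Ff] by simp
    then obtain f u where fu: "f \<in> ET" "u \<in> f" "\<forall>q\<in>\<eta>. has_tail_in q (side f u)" "W (side f u) \<inter> \<Union>F = {}"
      by iprover
    define D where "D = side f u"
    have regD: "region N ET D" using side_region[OF fu(1,2)] by (simp add: D_def)
    have pt: "points_to N ET X \<omega> (Inr \<eta>)" using sp(2) eta(2) by simp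
    have o: "orient \<omega> f u" using pt fu unfolding pt_Inr by blast
    then obtain n where n: "\<forall>i\<ge>n. r i \<in> W (side f u)" using r(1) unfolding oriented_towards_def has_tail_in_def by blast
    have WC: "W (side f u) \<subseteq> C0"
      by (rule W_clean_sub[OF C0 fu(1,2) _ n[rule_format, OF order_refl] r(2)[rule_format, of n]]) (use fu(4) in \<open>simp add: F_def\<close>)
    obtain q where q: "q \<in> \<eta>" using end_nonempty[OF eta(1)] by blast
    have "\<eta> \<in> region_ends N ET D" using Tend_in_region[OF eta(1) q] fu(3) q by (simp add: D_def)
    then have inD: "phi N ET X \<omega> \<in> Inl ` D \<union> Inr ` region_ends N ET D" using eta(2) by simp
    have "\<forall>\<omega>'\<in>edge_ends V E. phi N ET X \<omega>' \<in> Inl ` D \<union> Inr ` region_ends N ET D \<longrightarrow> \<omega>' \<in> region_ends V E C0"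
    proof (intro ballI impI)
      fix \<omega>' assume om': "\<omega>' \<in> edge_ends V E" and pin: "phi N ET X \<omega>' \<in> Inl ` D \<union> Inr ` region_ends N ET D"
      have sp': "points_to N ET X \<omega>' (phi N ET X \<omega>')" using phi_spec[OF om'] by auto
      have o': "orient \<omega>' f u"
        using pin
      proof (elim UnE imageE)
        fix s assume s: "s \<in> D" "phi N ET X \<omega>' = Inl s"
        then have "points_to N ET X \<omega>' (Inl s)" using sp' by simp
        thus ?thesis using fu(1,2) s(1) unfolding pt_Inl D_def by blast
      next
        fix \<eta>' assume e: "\<eta>' \<in> region_ends N ET D" "phi N ET X \<omega>' = Inr \<eta>'"
        have e': "\<eta>' \<in> edge_ends N ET" using e(1) by (simp add: region_ends_def)
        obtain q' where q': "q' \<in> \<eta>'" "\<forall>i. q' i \<in> D" using e(1) by (auto simp: region_ends_def)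
        have "has_tail_in q' (side f u)" using q'(2) unfolding has_tail_in_def D_def by blast
        then have "\<forall>q''\<in>\<eta>'. has_tail_in q'' (side f u)" using Tor_iff[OF e' q'(1) fu(1)] by blast
        moreover have "points_to N ET X \<omega>' (Inr \<eta>')" using sp' e(2) by simp
        ultimately show ?thesis using fu(1,2) unfolding pt_Inr by blast
      qed
      obtain r' where r': "r' \<in> \<omega>'" using end_nonempty[OF om'] by blast
      have "has_tail_in r' (W (side f u))" using o' r' unfolding oriented_towards_def by blast
      then have "has_tail_in r' C0" using WC by (rule has_tail_mono)
      thus "\<omega>' \<in> region_ends V E C0" by (rule end_in_region[OF om' r'])
    qed
    thus ?thesis using regD inD by blast
  next
    case True
    then obtain t where t: "t \<in> N" "phi N ET X \<omega> = Inl t" by blast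
    have pt: "points_to N ET X \<omega> (Inl t)" using sp(2) t(2) by simp
    have XtC: "X t \<subseteq> C0"
    proof
      fix x assume x: "x \<in> X t"
      have dx: "edge_dominates V E x \<omega>" by (rule sink_dominated[OF om t(1) pt x])
      obtain n where n: "\<forall>i\<ge>n. conn V (E - F) x (r i)" using dx Ff r(1) unfolding edge_dominates_def by blast
      have "conn V (E - F) (r n) x" using n[rule_format, OF order_refl] by (rule conn_sym)
      thus "x \<in> C0" using r(2)[rule_format, of n] by (rule conn_closed) (use cl in blast)
    qed
    have blkC: "X s \<subseteq> C0" if sN: "s \<in> N" and sC: "X s \<inter> C0 \<noteq> {}" for s
    proof
      fix y assume y: "y \<in> X s"
      obtain x where x: "x \<in> X s" "x \<in> C0" using sC by blast
      have "conn V (E - F) x y" using block_conn[OF sN x(1) y Ff(1)] .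
      thus "y \<in> C0" using x(2) by (rule conn_closed) (use cl in blast)
    qed
    define D0 where "D0 = {s \<in> N. X s \<subseteq> C0}"
    define D where "D = {s. conn D0 ET t s}"
    have tD0: "t \<in> D0" using t XtC by (simp add: D0_def)
    have DD0: "D \<subseteq> D0" using conn_in tD0 by (auto simp: D_def)
    have tD: "t \<in> D" by (simp add: D_def conn_refl)
    have tx: "conn D ET t x" if "x \<in> D" for x
    proof -
      have "conn D0 ET t x" using that by (simp add: D_def)
      thus ?thesis
      proof (rule conn_restrict)
        show "t \<in> D" by (rule tD)
        show "\<And>a b. a \<in> D \<Longrightarrow> adj D0 ET a b \<Longrightarrow> b \<in> D"
          unfolding D_def using conn_step by (metis mem_Collect_eq)
      qed
    qed
    have Dconn: "conn D ET x y" if "x \<in> D" "y \<in> D" for x y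
      using tx[OF that(1)] tx[OF that(2)] by (meson conn_sym conn_trans)
    have bnd: "\<exists>g. g \<in> F \<and> nd ` g = e" if eb: "e \<in> boundary ET D" for e
    proof -
      have eE: "e \<in> ET" using eb by (simp add: boundary_def)
      obtain a b where ab: "a \<noteq> b" "a \<in> N" "b \<in> N" "e = {a,b}" using ET_ex eE by blast
      have "(a \<in> D \<and> b \<notin> D) \<or> (b \<in> D \<and> a \<notin> D)" using eb ab by (auto simp: boundary_def)
      then obtain a' b' where a'b': "e = {a',b'}" "a' \<in> D" "b' \<notin> D" "b' \<in> N" "a' \<in> N"
        using ab by (metis insert_commute)
      have e2: "{a',b'} \<in> ET" using eE a'b'(1) by simp
      have "b' \<notin> D0"
      proof
        assume "b' \<in> D0"
        then have "adj D0 ET a' b'" using a'b'(2) DD0 e2 by (auto simp: adj_def)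
        then have "b' \<in> D" using a'b'(2) conn_step unfolding D_def by (metis mem_Collect_eq)
        thus False using a'b'(3) by simp
      qed
      then have "\<not> X b' \<subseteq> C0" using a'b'(4) by (simp add: D0_def)
      then have Xb: "X b' \<inter> C0 = {}" using blkC[OF a'b'(4)] by blast
      obtain p qq where pq: "p \<in> X a'" "qq \<in> X b'" "{p,qq} \<in> E" using wit e2 by blast
      have pC: "p \<in> C0" using pq(1) a'b'(2) DD0 by (auto simp: D0_def)
      have qC: "qq \<notin> C0" using Xb pq(2) by blast
      have "{p,qq} \<in> F" unfolding F_def boundary_def using pq(3) pC qC by blast
      moreover have "nd ` {p,qq} = e" using nd_eq[OF a'b'(5) pq(1)] nd_eq[OF a'b'(4) pq(2)] a'b'(1) by simp
      ultimately show ?thesis by blast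
    qed
    define h where "h e = (SOME g. g \<in> F \<and> nd ` g = e)" for e
    have hp: "h e \<in> F \<and> nd ` (h e) = e" if "e \<in> boundary ET D" for e
      unfolding h_def by (rule someI_ex) (rule bnd[OF that])
    have "inj_on h (boundary ET D)"
    proof (rule inj_onI)
      fix a b assume "a \<in> boundary ET D" "b \<in> boundary ET D" "h a = h b"
      thus "a = b" using hp by metis
    qed
    moreover have "h ` boundary ET D \<subseteq> F" using hp by blast
    ultimately have fb: "finite (boundary ET D)" using inj_on_finite Ff(1) by blast
    have DN: "D \<subseteq> N" using DD0 by (auto simp: D0_def)
    have regD: "region N ET D" unfolding region_def connected_graph_def using DN tD Dconn fb by blast
    have inD: "phi N ET X \<omega> \<in> Inl ` D \<union> Inr ` region_ends N ET D" using t tD by simp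
    have "\<forall>\<omega>'\<in>edge_ends V E. phi N ET X \<omega>' \<in> Inl ` D \<union> Inr ` region_ends N ET D \<longrightarrow> \<omega>' \<in> region_ends V E C0"
    proof (intro ballI impI)
      fix \<omega>' assume om': "\<omega>' \<in> edge_ends V E" and pin: "phi N ET X \<omega>' \<in> Inl ` D \<union> Inr ` region_ends N ET D"
      have sp': "points_to N ET X \<omega>' (phi N ET X \<omega>')" using phi_spec[OF om'] by auto
      show "\<omega>' \<in> region_ends V E C0"
        using pin
      proof (elim UnE imageE)
        fix s assume s: "s \<in> D" "phi N ET X \<omega>' = Inl s"
        have sN: "s \<in> N" using s DN by blast
        have pts: "points_to N ET X \<omega>' (Inl s)" using sp' s by simp
        obtain x where x: "x \<in> X s" using Xne[OF sN] by blast
        have dx: "edge_dominates V E x \<omega>'" by (rule sink_dominated[OF om' sN pts x])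
        have "x \<in> C0" using x s(1) DD0 by (auto simp: D0_def)
        thus ?thesis using dom_in_region[OF C0 om' dx] by simp
      next
        fix \<eta>' assume e: "\<eta>' \<in> region_ends N ET D" "phi N ET X \<omega>' = Inr \<eta>'"
        have e': "\<eta>' \<in> edge_ends N ET" using e(1) by (simp add: region_ends_def)
        obtain q' where q': "q' \<in> \<eta>'" "\<forall>i. q' i \<in> D" using e(1) by (auto simp: region_ends_def)
        have cs: "\<exists>f u. f \<in> ET \<and> u \<in> f \<and> (\<forall>q\<in>\<eta>'. has_tail_in q (side f u)) \<and> W (side f u) \<inter> \<Union>F = {}"
          using clean_side[OF e' Ff] by simp
        then obtain f u where fu: "f \<in> ET" "u \<in> f" "\<forall>q\<in>\<eta>'. has_tail_in q (side f u)" "W (side f u) \<inter> \<Union>F = {}"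
          by iprover
        obtain n where n: "\<forall>i\<ge>n. q' i \<in> side f u" using fu(3) q'(1) by (auto simp: has_tail_in_def)
        define s where "s = q' n"
        have s: "s \<in> side f u" "s \<in> D" using n q'(2) by (auto simp: s_def)
        have sN: "s \<in> N" using s DN by blast
        obtain x where x: "x \<in> X s" using Xne[OF sN] by blast
        have xC: "x \<in> C0" using x s(2) DD0 by (auto simp: D0_def)
        have xW: "x \<in> W (side f u)" using x s(1) by blast
        have WC: "W (side f u) \<subseteq> C0"
          by (rule W_clean_sub[OF C0 fu(1,2) _ xW xC]) (use fu(4) in \<open>simp add: F_def\<close>)
        have "points_to N ET X \<omega>' (Inr \<eta>')" using sp' e(2) by simp
        then have o': "orient \<omega>' f u" using fu(1,2,3) unfolding pt_Inr by blast
        obtain r' where r': "r' \<in> \<omega>'" using end_nonempty[OF om'] by blast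
        have "has_tail_in r' (W (side f u))" using o' r' unfolding oriented_towards_def by blast
        then have "has_tail_in r' C0" using WC by (rule has_tail_mono)
        thus ?thesis by (rule end_in_region[OF om' r'])
      qed
    qed
    thus ?thesis using regD inD by blast
  qed
qed

lemma surj_end:
  assumes eta: "\<eta> \<in> edge_ends N ET"
  shows "\<exists>\<omega>\<in>edge_ends V E. phi N ET X \<omega> = Inr \<eta>"
proof -
  obtain q where q: "q \<in> \<eta>" using end_nonempty[OF eta] by blast
  have rq: "ray N ET q" using end_ray[OF eta q] .
  define S where "S k = side (qe q k) (q (Suc k))" for k
  define Wk where "Wk k = W (S k)" for k
  have dj: "side (qe q k) (q k) \<inter> S k = {}" for k
    unfolding S_def by (rule side_disj) (rule tray_edge[OF rq])
  have Smono: "S (Suc k) \<subseteq> S k" for k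
  proof
    fix s assume s: "s \<in> S (Suc k)"
    have c: "conn (S (Suc k)) ET (q (Suc (Suc k))) s" using side_conn'[of s] s by (simp add: S_def)
    have "q k \<in> side (qe q (Suc k)) (q (Suc k))" using tray_before[OF rq, of k "Suc k"] by simp
    then have "q k \<notin> S (Suc k)" using dj[of "Suc k"] by blast
    then have "\<not> qe q k \<subseteq> S (Suc k)" by blast
    moreover have "q (Suc (Suc k)) \<in> side (qe q k) (q (Suc k))" using tray_after[OF rq, of k "Suc (Suc k)"] by simp
    ultimately show "s \<in> S k" using conn_stays_side[OF c tray_edge[OF rq]] by (simp add: S_def)
  qed
  have "\<exists>r. ray V E r \<and> (\<forall>k. \<exists>n. \<forall>i\<ge>n. r i \<in> Wk k)"
  proof (rule nested_ray)
    show "\<And>k. Wk (Suc k) \<subseteq> Wk k" using Smono unfolding Wk_def by blast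
    show "\<And>k x y. x \<in> Wk k \<Longrightarrow> y \<in> Wk k \<Longrightarrow> conn (Wk k) E x y"
      unfolding Wk_def S_def using W_side_conn[OF tray_edge[OF rq]] by simp
    show "\<And>k. Wk k \<noteq> {}"
    proof -
      fix k
      have "q (Suc k) \<in> S k" using side_self[OF tray_N[OF rq]] by (simp add: S_def)
      thus "Wk k \<noteq> {}" using Xne[OF tray_N[OF rq]] unfolding Wk_def by blast
    qed
    show "Wk 0 \<subseteq> V" unfolding Wk_def using W_sub side_sub by (simp add: S_def)
    show "\<And>x. x \<in> Wk 0 \<Longrightarrow> \<exists>k. x \<notin> Wk k"
    proof -
      fix x assume "x \<in> Wk 0"
      then have xV: "x \<in> V" unfolding Wk_def S_def using W_sub side_sub by blast
      obtain i where i: "\<forall>k\<in>{nd x}. k \<in> side (qe q i) (q i)" using tray_leaves[OF rq, of "{nd x}" 0] nd[OF xV] by auto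
      have "nd x \<notin> S i" using i dj[of i] by blast
      have "x \<notin> Wk i"
      proof
        assume "x \<in> Wk i"
        then obtain s where s: "s \<in> S i" "x \<in> X s" unfolding Wk_def by blast
        have "s \<in> N" using s(1) side_sub unfolding S_def by blast
        then have "nd x = s" using nd_eq s(2) by blast
        thus False using s(1) \<open>nd x \<notin> S i\<close> by simp
      qed
      thus "\<exists>k. x \<notin> Wk k" by blast
    qed
  qed
  then obtain r where r: "ray V E r" "\<forall>k. \<exists>n. \<forall>i\<ge>n. r i \<in> Wk k" by blast
  define \<omega> where "\<omega> = eclass V E r"
  have om: "\<omega> \<in> edge_ends V E" "r \<in> \<omega>" using eclass_in[OF r(1)] eclass_self[OF r(1)] by (auto simp: \<omega>_def)
  have "points_to N ET X \<omega> (Inr \<eta>)" unfolding pt_Inr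
  proof (intro ballI impI)
    fix e u assume e: "e \<in> ET" "u \<in> e" and T: "\<forall>q'\<in>\<eta>. has_tail_in q' (side e u)"
    obtain n0 where n0: "\<forall>i\<ge>n0. q i \<in> side e u" using T q by (auto simp: has_tail_in_def)
    have eN: "finite e" "e \<subseteq> N" using ET_ex[OF e(1)] by auto
    obtain i where i: "i \<ge> n0" "\<forall>k\<in>e. k \<in> side (qe q i) (q i)" using tray_leaves[OF rq eN] by blast
    have ue: "u \<notin> S i" using i(2) e(2) dj[of i] by blast
    have sub: "S i \<subseteq> side e u"
    proof
      fix s assume s: "s \<in> S i"
      have c: "conn (S i) ET (q (Suc i)) s" using side_conn'[of s] s by (simp add: S_def)
      have "\<not> e \<subseteq> S i" using ue e(2) by blast
      moreover have "q (Suc i) \<in> side e u" using n0 i(1) by simp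
      ultimately show "s \<in> side e u" using conn_stays_side[OF c e(1)] by blast
    qed
    obtain n where n: "\<forall>j\<ge>n. r j \<in> Wk i" using r(2) by blast
    have "\<forall>j\<ge>n. r j \<in> W (side e u)" using n sub unfolding Wk_def by blast
    then have "has_tail_in r (W (side e u))" unfolding has_tail_in_def by blast
    thus "orient \<omega> e u" using orient_iff[OF om(1) om(2) e] by simp
  qed
  then have "phi N ET X \<omega> = Inr \<eta>" using phi_eqI[OF om(1)] eta by (simp add: full_space_def)
  thus ?thesis using om by blast
qed

lemma region_V: "region V E V"
proof -
  have "boundary E V = {}" using E_ex by (force simp: boundary_def)
  thus ?thesis using cG by (simp add: region_def)
qed

lemma region_N: "region N ET N"
proof -
  have "boundary ET N = {}" using ET_ex by (force simp: boundary_def)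
  thus ?thesis using cT by (simp add: region_def)
qed

lemma region_ends_all: "region_ends V' E' V' = edge_ends V' E'"
proof
  show "region_ends V' E' V' \<subseteq> edge_ends V' E'" by (auto simp: region_ends_def)
  show "edge_ends V' E' \<subseteq> region_ends V' E' V'"
  proof
    fix \<omega> assume om: "\<omega> \<in> edge_ends V' E'"
    obtain r where r: "r \<in> \<omega>" using end_nonempty[OF om] by blast
    have "\<forall>i. r i \<in> V'" using end_ray[OF om r] by (simp add: ray_def)
    thus "\<omega> \<in> region_ends V' E' V'" using om r unfolding region_ends_def by blast
  qed
qed

lemma main_embedding: "embedding_map (edge_end_top V E) (full_top N ET) (phi N ET X)"
  unfolding edge_end_top_def full_top_def
proof (rule embedding_generic)
  show "edge_ends V E \<subseteq> \<Union>{region_ends V E C |C. region V E C}"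
    using region_V region_ends_all[of V E] by blast
  show "phi N ET X ` edge_ends V E \<subseteq> full_space N ET" using phi_spec by blast
  have "full_space N ET \<subseteq> Inl ` N \<union> Inr ` region_ends N ET N"
    using region_ends_all[of N ET] by (simp add: full_space_def)
  moreover have "Inl ` N \<union> Inr ` region_ends N ET N \<in> {Inl ` C \<union> Inr ` region_ends N ET C |C. region N ET C}"
    using region_N by blast
  then have "Inl ` N \<union> Inr ` region_ends N ET N \<subseteq> \<Union>{Inl ` C \<union> Inr ` region_ends N ET C |C. region N ET C}"
    by (rule Union_upper)
  moreover have "phi N ET X ` edge_ends V E \<subseteq> full_space N ET" using phi_spec by blast
  ultimately show "phi N ET X ` edge_ends V E \<subseteq> \<Union>{Inl ` C \<union> Inr ` region_ends N ET C |C. region N ET C}"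
    by (meson order_trans)
  show "inj_on (phi N ET X) (edge_ends V E)" using phi_inj by (meson inj_onI)
  show "\<exists>C\<in>{region_ends V E C |C. region V E C}. x \<in> C \<and> (\<forall>x'\<in>edge_ends V E \<inter> C. phi N ET X x' \<in> U)"
    if x: "x \<in> edge_ends V E" and U: "U \<in> {Inl ` C \<union> Inr ` region_ends N ET C |C. region N ET C}"
      and px: "phi N ET X x \<in> U" for x U
  proof -
    obtain D where D: "region N ET D" "U = Inl ` D \<union> Inr ` region_ends N ET D" using U by blast
    obtain C where C: "region V E C" "x \<in> region_ends V E C" "C \<subseteq> W D"
      using cont_case[OF x D(1)] px D(2) by blast
    have "\<forall>x'\<in>edge_ends V E \<inter> region_ends V E C. phi N ET X x' \<in> U"
    proof
      fix x' assume x': "x' \<in> edge_ends V E \<inter> region_ends V E C"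
      then obtain r' where r': "r' \<in> x'" "\<forall>i. r' i \<in> C" by (auto simp: region_ends_def)
      have "\<forall>i. r' i \<in> W D" using r'(2) C(3) by blast
      thus "phi N ET X x' \<in> U" using phi_in_region[OF D(1) _ r'(1)] x' D(2) by blast
    qed
    thus ?thesis using C by blast
  qed
  show "\<exists>U\<in>{Inl ` C \<union> Inr ` region_ends N ET C |C. region N ET C}. phi N ET X x \<in> U \<and> (\<forall>x'\<in>edge_ends V E. phi N ET X x' \<in> U \<longrightarrow> x' \<in> C)"
    if x: "x \<in> edge_ends V E" and C: "C \<in> {region_ends V E C |C. region V E C}" and xC: "x \<in> C" for x C
  proof -
    obtain C0 where C0: "region V E C0" "C = region_ends V E C0" using C by blast
    obtain D where D: "region N ET D" "phi N ET X x \<in> Inl ` D \<union> Inr ` region_ends N ET D"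
      "\<forall>\<omega>'\<in>edge_ends V E. phi N ET X \<omega>' \<in> Inl ` D \<union> Inr ` region_ends N ET D \<longrightarrow> \<omega>' \<in> region_ends V E C0"
      using open_case[OF x C0(1)] xC C0(2) by blast
    thus ?thesis using C0(2) by blast
  qed
qed

end

theorem theorem3p1:
  fixes V :: "'v set" and E :: "'v set set" and N :: "'n set" and ET :: "'n set set"
    and X :: "'n \<Rightarrow> 'v set"
  assumes "graph V E" and "connected_graph V E"
    and "tree_cut_decomp V E N ET X"
    and "finite_adhesion E N ET X"
    and "X ` N = edge_blocks V E"
    and "\<forall>t1 t2. {t1, t2} \<in> ET \<longrightarrow> (\<exists>x\<in>X t1. \<exists>y\<in>X t2. {x, y} \<in> E)"
  shows "embedding_map (edge_end_top V E) (full_top N ET) (phi N ET X)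
    \<and> bij_betw (phi N ET X) {\<omega> \<in> edge_ends V E. \<not> (\<exists>v. edge_dominates V E v \<omega>)}
               (Inr ` edge_ends N ET)
    \<and> inj_on (phi N ET X) {\<omega> \<in> edge_ends V E. \<exists>v. edge_dominates V E v \<omega>}
    \<and> phi N ET X ` {\<omega> \<in> edge_ends V E. \<exists>v. edge_dominates V E v \<omega>} \<subseteq> Inl ` N
    \<and> (\<forall>\<omega>\<in>edge_ends V E. \<forall>t. (\<exists>v. edge_dominates V E v \<omega>) \<and> phi N ET X \<omega> = Inl t
         \<longrightarrow> X t = {v. edge_dominates V E v \<omega>})"
proof -
  have "tcd V E N ET X" using assms by (simp add: tcd_def)
  then interpret T: tcd V E N ET X .
  have inj: "inj_on (phi N ET X) (edge_ends V E)" using T.phi_inj by (meson inj_onI)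
  have bij: "bij_betw (phi N ET X) {\<omega> \<in> edge_ends V E. \<not> (\<exists>v. edge_dominates V E v \<omega>)} (Inr ` edge_ends N ET)"
    unfolding bij_betw_def
  proof
    show "inj_on (phi N ET X) {\<omega> \<in> edge_ends V E. \<not> (\<exists>v. edge_dominates V E v \<omega>)}"
      using inj by (rule inj_on_subset) blast
    show "phi N ET X ` {\<omega> \<in> edge_ends V E. \<not> (\<exists>v. edge_dominates V E v \<omega>)} = Inr ` edge_ends N ET"
    proof
      show "phi N ET X ` {\<omega> \<in> edge_ends V E. \<not> (\<exists>v. edge_dominates V E v \<omega>)} \<subseteq> Inr ` edge_ends N ET"
      proof
        fix z :: "'n + (nat \<Rightarrow> 'n) set" assume "z \<in> phi N ET X ` {\<omega> \<in> edge_ends V E. \<not> (\<exists>v. edge_dominates V E v \<omega>)}"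
        then obtain \<omega> where om: "\<omega> \<in> edge_ends V E" "\<not> (\<exists>v. edge_dominates V E v \<omega>)" "z = phi N ET X \<omega>" by blast
        have sp: "phi N ET X \<omega> \<in> full_space N ET" "points_to N ET X \<omega> (phi N ET X \<omega>)" using T.phi_spec[OF om(1)] by auto
        have "\<not> (\<exists>t\<in>N. phi N ET X \<omega> = Inl t)"
        proof
          assume "\<exists>t\<in>N. phi N ET X \<omega> = Inl t"
          then obtain t where t: "t \<in> N" "phi N ET X \<omega> = Inl t" by blast
          obtain v where v: "v \<in> X t" using T.Xne[OF t(1)] by blast
          have "edge_dominates V E v \<omega>" using T.sink_dominated[OF om(1) t(1) _ v] sp(2) t(2) by simp
          thus False using om(2) by blast
        qed
        thus "z \<in> Inr ` edge_ends N ET" using sp(1) om(3) by (auto simp: full_space_def)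
      qed
      show "Inr ` edge_ends N ET \<subseteq> phi N ET X ` {\<omega> \<in> edge_ends V E. \<not> (\<exists>v. edge_dominates V E v \<omega>)}"
      proof
        fix z :: "'n + (nat \<Rightarrow> 'n) set" assume "z \<in> Inr ` edge_ends N ET"
        then obtain \<eta> where eta: "\<eta> \<in> edge_ends N ET" "z = Inr \<eta>" by blast
        obtain \<omega> where om: "\<omega> \<in> edge_ends V E" "phi N ET X \<omega> = Inr \<eta>" using T.surj_end[OF eta(1)] by blast
        have "\<not> (\<exists>v. edge_dominates V E v \<omega>)"
        proof
          assume "\<exists>v. edge_dominates V E v \<omega>"
          then obtain v where "edge_dominates V E v \<omega>" by blast
          then have "phi N ET X \<omega> = Inl (T.nd v)" using T.dom_phi[OF om(1)] by blast
          thus False using om(2) by simp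
        qed
        then have "\<omega> \<in> {\<omega> \<in> edge_ends V E. \<not> (\<exists>v. edge_dominates V E v \<omega>)}" using om(1) by simp
        moreover have "z = phi N ET X \<omega>" using om(2) eta(2) by simp
        ultimately show "z \<in> phi N ET X ` {\<omega> \<in> edge_ends V E. \<not> (\<exists>v. edge_dominates V E v \<omega>)}"
          by (rule rev_image_eqI)
      qed
    qed
  qed
  have inj2: "inj_on (phi N ET X) {\<omega> \<in> edge_ends V E. \<exists>v. edge_dominates V E v \<omega>}"
    using inj by (rule inj_on_subset) blast
  have img: "phi N ET X ` {\<omega> \<in> edge_ends V E. \<exists>v. edge_dominates V E v \<omega>} \<subseteq> Inl ` N"
  proof
    fix z :: "'n + (nat \<Rightarrow> 'n) set" assume "z \<in> phi N ET X ` {\<omega> \<in> edge_ends V E. \<exists>v. edge_dominates V E v \<omega>}"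
    then obtain \<omega> v where om: "\<omega> \<in> edge_ends V E" "edge_dominates V E v \<omega>" "z = phi N ET X \<omega>" by blast
    have "v \<in> V" using om(2) by (simp add: edge_dominates_def)
    thus "z \<in> Inl ` N" using T.dom_phi[OF om(1,2)] om(3) T.nd by blast
  qed
  have part2: "\<forall>\<omega>\<in>edge_ends V E. \<forall>t. (\<exists>v. edge_dominates V E v \<omega>) \<and> phi N ET X \<omega> = Inl t
         \<longrightarrow> X t = {v. edge_dominates V E v \<omega>}"
  proof (intro ballI allI impI)
    fix \<omega> t assume om: "\<omega> \<in> edge_ends V E" and h: "(\<exists>v. edge_dominates V E v \<omega>) \<and> phi N ET X \<omega> = Inl t"
    then obtain v where v: "edge_dominates V E v \<omega>" by blast
    have vV: "v \<in> V" using v by (simp add: edge_dominates_def)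
    have tv: "t = T.nd v" using T.dom_phi[OF om v] h by simp
    have tN: "t \<in> N" "v \<in> X t" using T.nd[OF vV] tv by auto
    show "X t = {v. edge_dominates V E v \<omega>}"
    proof
      show "X t \<subseteq> {v. edge_dominates V E v \<omega>}" using T.dom_block[OF v tN(1) tN(2)] by blast
      show "{v. edge_dominates V E v \<omega>} \<subseteq> X t"
      proof
        fix u assume "u \<in> {v. edge_dominates V E v \<omega>}"
        then have du: "edge_dominates V E u \<omega>" by simp
        have uV: "u \<in> V" using du by (simp add: edge_dominates_def)
        have "T.nd u = t" using T.dom_phi[OF om du] h by simp
        thus "u \<in> X t" using T.nd[OF uV] by simp
      qed
    qed
  qed
  show ?thesis using T.main_embedding bij inj2 img part2 by blast
qed


end
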